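(* Let $|q|<1$ and let $(\alpha_n(a,k,q),\beta_n(a,k,q))_{n\ge0}$ be sequences depending on parameters $a,k$ and base $q$ such that $(\alpha_n(a,k,q),\beta_n(a,k,q))$, $(\alpha_n(-a,-k,q),\beta_n(-a,-k,q))$ and $(\alpha_n(a^2,k^2,q^2),\beta_n(a^2,k^2,q^2))$ are WP-Bailey pairs (the last with base $q^2$). Assume $|qa|<|z|$, that no denominator vanishes, and that all series below converge absolutely. Then \begin{multline*} \sum_{n=1}^{\infty} \frac{(1-k q^{2n})(z;q)_{n}(q;q)_{n-1}}{(1-k)( q k,q k/z;q)_{n}}\left( \frac{q a}{ z }\right )^{n} \beta_n(a,k,q) + \sum_{n=1}^{\infty} \frac{(1+k q^{2n})(z;q)_{n}(q;q)_{n-1}}{(1+k)( -q k,-q k/z;q)_{n}}\left( \frac{-q a}{ z }\right )^{n}\beta_n(-a,-k,q)\\ -2 \sum_{n=1}^{\infty} \frac{(1-k^2q^{4n})(z^2;q^2)_{n}(q^2;q^2)_{n-1}} {(1-k^2)( q^2 k^2,q^2k^2/z^2;q^2)_{n}}\left( \frac{q^2 a^2}{ z^2 }\right )^{n}\beta_n(a^2,k^2,q^2)\\ =\sum_{n=1}^{\infty}\frac{(z;q)_{n}(q;q)_{n-1}}{(q a ,q a/z;q)_n}\left (\frac{q a}{z}\right)^{n}\alpha_n(a,k,q) +\sum_{n=1}^{\infty}\frac{(z;q)_{n}(q;q)_{n-1}}{(-q a ,-q a/z;q)_n}\left (\frac{-q a}{z}\right)^{n}\alpha_n(-a,-k,q)\\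 -2\sum_{n=1}^{\infty}\frac{(z^2;q^2)_{n}(q^2;q^2)_{n-1}}{(q^2 a^2 ,q^2a^2/z^2;q^2)_n}\left (\frac{q^2a^2}{z^2}\right)^{n}\alpha_n(a^2,k^2,q^2). \end{multline*}
   Context: Notation: $(x;q)_n=(1-x)(1-xq)\cdots(1-xq^{n-1})$, $(x;q)_0=1$, $(x;q)_\infty=\prod_{j\ge0}(1-xq^j)$, and $(x_1,\dots,x_m;q)_n=(x_1;q)_n\cdots(x_m;q)_n$. A WP-Bailey pair (with parameters $a,k$ and base $q$) is a pair of sequences $(\alpha_n(a,k,q),\beta_n(a,k,q))_{n\ge0}$ with $\alpha_0=\beta_0=1$ and, for $n>0$, $$\beta_n(a,k,q)=\sum_{j=0}^{n}\frac{(k/a;q)_{n-j}(k;q)_{n+j}}{(q;q)_{n-j}(aq;q)_{n+j}}\alpha_j(a,k,q).$$ *)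

theory Defs
  imports Complex_Main
begin

definition qpoch :: "complex \<Rightarrow> complex \<Rightarrow> nat \<Rightarrow> complex" where
  "qpoch x q n = (\<Prod>j<n. (1 - x * q ^ j))"

definition WP_Bailey_pair ::
  "(nat \<Rightarrow> complex) \<Rightarrow> (nat \<Rightarrow> complex) \<Rightarrow> complex \<Rightarrow> complex \<Rightarrow> complex \<Rightarrow> bool" where
  "WP_Bailey_pair \<alpha> \<beta> a k q \<longleftrightarrow>
     \<alpha> 0 = 1 \<and> \<beta> 0 = 1 \<and>
     (\<forall>n>0. \<beta> n = (\<Sum>j=0..n.
        (qpoch (k/a) q (n-j) * qpoch k q (n+j)) / (qpoch q q (n-j) * qpoch (a*q) q (n+j)) * \<alpha> j))"

definition bcoef :: "complex \<Rightarrow> complex \<Rightarrow> complex \<Rightarrow> complex \<Rightarrow> nat \<Rightarrow> complex" where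
  "bcoef a k q z n =
     (1 - k * q ^ (2*n)) * qpoch z q n * qpoch q q (n-1)
       / ((1 - k) * qpoch (q*k) q n * qpoch (q*k/z) q n) * (q*a/z) ^ n"

definition acoef :: "complex \<Rightarrow> complex \<Rightarrow> complex \<Rightarrow> complex \<Rightarrow> nat \<Rightarrow> complex" where
  "acoef a k q z n =
     qpoch z q n * qpoch q q (n-1) / (qpoch (q*a) q n * qpoch (q*a/z) q n) * (q*a/z) ^ n"

end

theory Submission
  imports Defs "HOL-Analysis.Uniform_Limit"
begin

lemma keypoly:
  fixes x y q a k w :: complex
  shows "(1-k*q*x*x*y*y)*(1-a*q*y)*(1-a*q*y*w)*(1-k*q*w)*x*(1-k*x*y*y)
     - (1-k*x*x*y*y)*(1-k*x*y*q)*(1-k*x*y*q*w)*(1-a*x*y*y*q)*(1-q*a*w)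
     = (w-x*y)*(1-x*y)*q*(a-k*x)*(1-k*x*y*y)*(1-k*a*q*q*x*y*y*w)
     - (1-k*x*y*q)*(1-k*x*y*q*w)*(1-a*x*y*y*q)*(1-x)*(1-k*a*q*x*y*y*w)"
  by algebra

lemma qpoch_0[simp]: "qpoch x q 0 = 1" by (simp add: qpoch_def)
lemma qpoch_Suc: "qpoch x q (Suc n) = qpoch x q n * (1 - x*q^n)"
  by (simp add: qpoch_def)
lemma qpoch_add: "qpoch x q (m+n) = qpoch x q m * qpoch (x*q^m) q n"
  by (induction n) (simp_all add: qpoch_Suc power_add mult_ac)
lemma qpoch_Suc': "qpoch x q (Suc n) = (1 - x) * qpoch (x*q) q n"
  using qpoch_add[of x q 1 n] by (simp add: qpoch_def)
lemma qpoch_shift_div: "1 - x \<noteq> 0 \<Longrightarrow> qpoch (x*q) q n = qpoch x q n * (1 - x*q^n) / (1 - x)"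
  using qpoch_Suc[of x q n] qpoch_Suc'[of x q n] by (simp add: field_simps)

definition Fgen :: "complex \<Rightarrow> complex \<Rightarrow> complex \<Rightarrow> complex \<Rightarrow> nat \<Rightarrow> (nat \<Rightarrow> complex) \<Rightarrow> nat \<Rightarrow> complex" where
  "Fgen a k q z j P m = (1 - k*q^(2*(m+j))) / (1-k) * qpoch (z*q^j) q m * P m
     * qpoch (q*a) q j * qpoch (q*a/z) q j / (qpoch (q*k) q (j+m) * qpoch (q*k/z) q (j+m))
     * (q*a/z)^m * qpoch (k/a) q m * qpoch k q (m+2*j) / (qpoch q q m * qpoch (a*q) q (m+2*j))"

definition Wgen :: "complex \<Rightarrow> complex \<Rightarrow> complex \<Rightarrow> complex \<Rightarrow> nat \<Rightarrow> (nat \<Rightarrow> complex) \<Rightarrow> nat \<Rightarrow> complex" where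
  "Wgen a k q z j P m = 1 / (1-k) * qpoch (z*q^j) q m * P m
     * qpoch (q*a) q j * qpoch (q*a/z) q j / (qpoch (q*k) q (j+m) * qpoch (q*k/z) q (j+m))
     * (q*a/z)^m * qpoch (k/a) q m * qpoch k q (m+2*j) / (qpoch q q m * qpoch (a*q) q (m+2*j))
     * (1 - q^m) * (1 - k*a*q^(m+2*j+1)/z) / (1 - q*a/z)"

lemma keyrat:
  fixes x y q a k z :: complex
  assumes z: "z \<noteq> 0" and k: "1 - k \<noteq> 0" and d: "1 - q*a/z \<noteq> 0"
  shows "(1-k*q*x*x*y*y)*(1-a*q*y)*(1-a*q*y/z)*(1-k*q/z)*x*(1-k*x*y*y)/((1-k)*(1-q*a/z))
     - (1-k*x*x*y*y)*(1-k*x*y*q)*(1-k*x*y*q/z)*(1-a*x*y*y*q)/(1-k)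
     = (1/z-x*y)*(1-x*y)*q*(a-k*x)*(1-k*x*y*y)*(1-k*a*q*q*x*y*y/z)/((1-k)*(1-q*a/z))
     - (1-k*x*y*q)*(1-k*x*y*q/z)*(1-a*x*y*y*q)*(1-x)*(1-k*a*q*x*y*y/z)/((1-k)*(1-q*a/z))"
proof -
  define w where "w = 1/z"
  have zw: "1/z = w" "a*q*y/z = a*q*y*w" "k*q/z = k*q*w" "k*x*y*q/z = k*x*y*q*w"
     "k*a*q*q*x*y*y/z = k*a*q*q*x*y*y*w" "k*a*q*x*y*y/z = k*a*q*x*y*y*w" "q*a/z = q*a*w"
    by (simp_all add: w_def)
  have p: "(1-k*q*x*x*y*y)*(1-a*q*y)*(1-a*q*y*w)*(1-k*q*w)*x*(1-k*x*y*y)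
     - (1-k*x*x*y*y)*(1-k*x*y*q)*(1-k*x*y*q*w)*(1-a*x*y*y*q)*(1-q*a*w)
     = (w-x*y)*(1-x*y)*q*(a-k*x)*(1-k*x*y*y)*(1-k*a*q*q*x*y*y*w)
     - (1-k*x*y*q)*(1-k*x*y*q*w)*(1-a*x*y*y*q)*(1-x)*(1-k*a*q*x*y*y*w)"
    by (rule keypoly)
  have d': "1 - q*a*w \<noteq> 0" using d zw by simp
  show ?thesis unfolding zw using p k d'
    by (simp add: divide_simps)
qed

lemma KEY:
  fixes a k q z :: complex and P :: "nat \<Rightarrow> complex"
  assumes q0: "q \<noteq> 0" and a: "a \<noteq> 0" and z: "z \<noteq> 0" and k: "1 - k \<noteq> 0"
    and qk: "1 - q*k \<noteq> 0" and qkz: "1 - q*k/z \<noteq> 0" and qa: "1 - q*a \<noteq> 0" and qaz: "1 - q*a/z \<noteq> 0"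
    and n1: "qpoch (q*k) q (Suc (j+m)) \<noteq> 0" and n2: "qpoch (q*k/z) q (Suc (j+m)) \<noteq> 0"
    and n3: "qpoch q q (Suc m) \<noteq> 0" and n4: "qpoch (a*q) q (Suc (m+2*j)) \<noteq> 0"
    and P: "P (Suc m) = P m * (1 - q^m*q^j)"
  shows "Fgen (a*q) (k*q) q z j P m - Fgen a k q z j P m = Wgen a k q z j P (Suc m) - Wgen a k q z j P m"
proof -
  define x where "x = q^m"
  define y where "y = q^j"
  define Z where "Z = qpoch (z*q^j) q m"
  define PP where "PP = P m"
  define A1 where "A1 = qpoch (q*a) q j"
  define A2 where "A2 = qpoch (q*a/z) q j"
  define K1 where "K1 = qpoch (q*k) q (j+m)"
  define K2 where "K2 = qpoch (q*k/z) q (j+m)"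
  define R where "R = (q*a/z)^m"
  define D where "D = qpoch (k/a) q m"
  define Kp where "Kp = qpoch k q (m+2*j)"
  define Qm where "Qm = qpoch q q m"
  define Aq where "Aq = qpoch (a*q) q (m+2*j)"
  have pw: "q^(j+m) = y*x" "q^(m+2*j) = x*y^2" "q^(2*(m+j)) = x*x*y*y" "q^(Suc m) = q*x"
      "q^(Suc m + 2*j + 1) = q*q*x*y*y" "q^(m+2*j+1) = q*x*y*y"
    by (simp_all add: x_def y_def power_add power_mult power2_eq_square mult_ac)
  have K1s: "qpoch (q*k) q (Suc (j+m)) = K1*(1-q*k*(y*x))" unfolding K1_def qpoch_Suc pw ..
  have K2s: "qpoch (q*k/z) q (Suc (j+m)) = K2*(1-q*k/z*(y*x))" unfolding K2_def qpoch_Suc pw ..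
  have Qs: "qpoch q q (Suc m) = Qm*(1-q*x)" unfolding Qm_def qpoch_Suc x_def ..
  have Aqs: "qpoch (a*q) q (Suc (m+2*j)) = Aq*(1-a*q*(x*y^2))" unfolding Aq_def qpoch_Suc pw ..
  have nz: "K1 \<noteq> 0" "K2 \<noteq> 0" "Qm \<noteq> 0" "Aq \<noteq> 0" "1-q*k*(y*x) \<noteq> 0" "1-q*k/z*(y*x) \<noteq> 0"
     "1-q*x \<noteq> 0" "1-a*q*(x*y^2) \<noteq> 0"
    using n1 n2 n3 n4 unfolding K1s K2s Qs Aqs by auto
  have qa': "1 - a*q \<noteq> 0" using qa by (simp add: mult.commute)
  have s1: "qpoch (q*(a*q)) q j = A1*(1-q*a*y)/(1-q*a)"
    using qpoch_shift_div[OF qa, of q j] by (simp add: A1_def y_def mult_ac)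
  have s2: "qpoch (q*(a*q)/z) q j = A2*(1-q*a/z*y)/(1-q*a/z)"
    using qpoch_shift_div[OF qaz, of q j] by (simp add: A2_def y_def mult_ac)
  have s3: "qpoch (q*(k*q)) q (j+m) = K1*(1-q*k*(y*x))/(1-q*k)"
    using qpoch_shift_div[OF qk, of q "j+m"] unfolding K1_def pw by (simp add: mult_ac)
  have s4: "qpoch (q*(k*q)/z) q (j+m) = K2*(1-q*k/z*(y*x))/(1-q*k/z)"
    using qpoch_shift_div[OF qkz, of q "j+m"] unfolding K2_def pw by (simp add: mult_ac)
  have s5: "(q*(a*q)/z)^m = R*x" unfolding R_def x_def by (subst power_mult_distrib[symmetric]) (simp add: mult_ac)
  have s6: "qpoch (k*q/(a*q)) q m = D" using a q0 by (simp add: D_def)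
  have s7: "qpoch (k*q) q (m+2*j) = Kp*(1-k*(x*y^2))/(1-k)"
    using qpoch_shift_div[OF k, of q "m+2*j"] unfolding Kp_def pw by (simp add: mult_ac)
  have s8: "qpoch (a*q*q) q (m+2*j) = Aq*(1-a*q*(x*y^2))/(1-a*q)"
    using qpoch_shift_div[OF qa', of q "m+2*j"] unfolding Aq_def pw by (simp add: mult_ac)
  have u1: "qpoch (z*q^j) q (Suc m) = Z*(1-z*y*x)" by (simp add: Z_def qpoch_Suc y_def x_def power_add mult_ac)
  have u2: "qpoch (q*k) q (j + Suc m) = K1*(1-q*k*(y*x))" using K1s by simp
  have u3: "qpoch (q*k/z) q (j + Suc m) = K2*(1-q*k/z*(y*x))" using K2s by simp
  have u4: "(q*a/z)^(Suc m) = R*(q*a/z)" by (simp add: R_def)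
  have u5: "qpoch (k/a) q (Suc m) = D*(1-k/a*x)" by (simp add: D_def qpoch_Suc x_def)
  have u6: "qpoch k q (Suc m + 2*j) = Kp*(1-k*(x*y^2))" by (simp add: Kp_def qpoch_Suc pw)
  have u7: "qpoch (a*q) q (Suc m + 2*j) = Aq*(1-a*q*(x*y^2))" using Aqs by simp
  have u8: "P (Suc m) = PP*(1-x*y)" using P by (simp add: PP_def x_def y_def)
  define G where "G = Z*PP*A1*A2*R*D*Kp/(K1*K2*Qm*Aq)"
  note defs = Z_def[symmetric] PP_def[symmetric] A1_def[symmetric] A2_def[symmetric]
       K1_def[symmetric] K2_def[symmetric] R_def[symmetric] D_def[symmetric] Kp_def[symmetric] Qm_def[symmetric]
       Aq_def[symmetric]
  have e1: "Fgen a k q z j P m = G * ((1-k*x*x*y*y)/(1-k))"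
    unfolding Fgen_def G_def defs pw by (simp add: divide_inverse mult_ac)
  have e2: "Fgen (a*q) (k*q) q z j P m = G * ((1-k*q*(x*x*y*y))/(1-k*q) * ((1-q*a*y)/(1-q*a)) * ((1-q*a/z*y)/(1-q*a/z))
      / (((1-q*k*(y*x))/(1-q*k)) * ((1-q*k/z*(y*x))/(1-q*k/z))) * x * ((1-k*(x*y^2))/(1-k)) / ((1-a*q*(x*y^2))/(1-a*q)))"
    unfolding Fgen_def G_def s1 s2 s3 s4 s5 s6 s7 s8 defs pw by (simp add: divide_inverse mult_ac)
  have e3: "Wgen a k q z j P m = G * ((1-x)*(1-k*a*(q*x*y*y)/z)/((1-k)*(1-q*a/z)))"
    unfolding Wgen_def G_def defs pw x_def[symmetric] by (simp add: divide_inverse mult_ac)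
  have e4: "Wgen a k q z j P (Suc m) = G * ((1-z*y*x)*(1-x*y)*(q*a/z)*(1-k/a*x)*(1-k*(x*y^2))
      / ((1-q*k*(y*x))*(1-q*k/z*(y*x))*(1-q*x)*(1-a*q*(x*y^2))) * (1-q*x)*(1-k*a*(q*q*x*y*y)/z)/((1-k)*(1-q*a/z)))"
    unfolding Wgen_def G_def u1 u2 u3 u4 u5 u6 u7 u8 Qs defs pw by (simp add: divide_inverse mult_ac)
  define V where "V = (1-k*x*y*q)*(1-k*x*y*q/z)*(1-a*x*y*y*q)"
  have Vnz: "V \<noteq> 0" using nz unfolding V_def by (auto simp: mult_ac power2_eq_square)
  have nz': "1-k*x*y*q \<noteq> 0" "1-k*x*y*q/z \<noteq> 0" "1-a*x*y*y*q \<noteq> 0" "1 - k*q \<noteq> 0" "1 - a*q \<noteq> 0"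
    using nz qk qa' by (auto simp: mult_ac power2_eq_square)
  have r1': "(1-k*x*x*y*y)*(1-k*x*y*q)*(1-k*x*y*q/z)*(1-a*x*y*y*q)/(1-k) = (1-k*x*x*y*y)/(1-k) * V"
    unfolding V_def by (simp add: mult_ac)
  have r1: "(1-k*x*x*y*y)/(1-k) = ((1-k*x*x*y*y)*(1-k*x*y*q)*(1-k*x*y*q/z)*(1-a*x*y*y*q)/(1-k)) / V"
    unfolding r1' using Vnz by simp
  have r2: "(1-k*q*(x*x*y*y))/(1-k*q) * ((1-q*a*y)/(1-q*a)) * ((1-q*a/z*y)/(1-q*a/z))
      / (((1-q*k*(y*x))/(1-q*k)) * ((1-q*k/z*(y*x))/(1-q*k/z))) * x * ((1-k*(x*y^2))/(1-k)) / ((1-a*q*(x*y^2))/(1-a*q))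
     = ((1-k*q*x*x*y*y)*(1-a*q*y)*(1-a*q*y/z)*(1-k*q/z)*x*(1-k*x*y*y)/((1-k)*(1-q*a/z))) / V"
    using nz nz' qa qaz qk qkz k z Vnz unfolding V_def by (simp add: divide_simps mult_ac power2_eq_square)
  have r3: "(1-x)*(1-k*a*(q*x*y*y)/z)/((1-k)*(1-q*a/z)) =
      ((1-k*x*y*q)*(1-k*x*y*q/z)*(1-a*x*y*y*q)*(1-x)*(1-k*a*q*x*y*y/z)/((1-k)*(1-q*a/z))) / V"
    unfolding V_def[symmetric] using Vnz by simp
  have r4: "(1-z*y*x)*(1-x*y)*(q*a/z)*(1-k/a*x)*(1-k*(x*y^2))
      / ((1-q*k*(y*x))*(1-q*k/z*(y*x))*(1-q*x)*(1-a*q*(x*y^2))) * (1-q*x)*(1-k*a*(q*q*x*y*y)/z)/((1-k)*(1-q*a/z))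
     = ((1/z-x*y)*(1-x*y)*q*(a-k*x)*(1-k*x*y*y)*(1-k*a*q*q*x*y*y/z)/((1-k)*(1-q*a/z))) / V"
    using nz nz' qa qaz qk qkz k z a Vnz unfolding V_def by (simp add: divide_simps mult_ac power2_eq_square)
  note kr = keyrat[OF z k qaz, of x y]
  show ?thesis unfolding e1 e2 e3 e4 r1 r2 r3 r4
    by (simp only: right_diff_distrib[symmetric] diff_divide_distrib[symmetric] kr)
qed

lemma geo_le: fixes r :: real assumes "0 \<le> r" "r < 1" shows "(\<Sum>i<n. r^i) \<le> 1/(1-r)"
proof -
  have "(\<Sum>i<n. r^i) = (1 - r^n)/(1-r)" using assms by (simp add: sum_gp_strict)
  also have "\<dots> \<le> 1/(1-r)" using assms by (intro divide_right_mono) auto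
  finally show ?thesis .
qed

lemma qpoch_upper:
  assumes q: "norm q < 1" and c: "norm c \<le> B"
  shows "norm (qpoch c q n) \<le> exp (B/(1 - norm q))"
proof -
  have "norm (qpoch c q n) \<le> (\<Prod>i<n. norm (1 - c*q^i))" unfolding qpoch_def by (rule norm_prod_le)
  also have "\<dots> \<le> (\<Prod>i<n. exp (B * norm q ^ i))"
  proof (rule prod_mono)
    fix i assume "i \<in> {..<n}"
    have "norm (1 - c*q^i) \<le> 1 + norm c * norm q ^ i"
      using norm_triangle_ineq4[of 1 "c*q^i"] by (simp add: norm_mult norm_power)
    also have "\<dots> \<le> 1 + B * norm q ^ i" using c by (intro add_left_mono mult_right_mono) auto
    also have "\<dots> \<le> exp (B * norm q ^ i)" by simp
    finally show "0 \<le> norm (1 - c*q^i) \<and> norm (1 - c*q^i) \<le> exp (B * norm q ^ i)" by simp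
  qed
  also have "\<dots> = exp (\<Sum>i<n. B * norm q ^ i)" by (simp add: exp_sum)
  also have "\<dots> \<le> exp (B/(1 - norm q))"
  proof -
    have B: "0 \<le> B" using c norm_ge_zero order_trans by blast
    have "(\<Sum>i<n. B * norm q ^ i) = B * (\<Sum>i<n. norm q ^ i)" by (simp add: sum_distrib_left)
    also have "\<dots> \<le> B * (1/(1 - norm q))" using geo_le[of "norm q" n] q B by (intro mult_left_mono) auto
    finally show ?thesis by simp
  qed
  finally show ?thesis .
qed

lemma qpoch_weier:
  assumes q: "norm q < 1"
  shows "1 - norm c / (1 - norm q) \<le> norm (qpoch c q n)"
proof -
  have "1 - (\<Sum>i<n. norm c * norm q ^ i) \<le> norm (qpoch c q n)"
  proof (induction n)
    case 0 then show ?case by simp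
  next
    case (Suc n)
    define s where "s = (\<Sum>i<n. norm c * norm q ^ i)"
    define t where "t = norm c * norm q ^ n"
    have t0: "0 \<le> t" "0 \<le> s" unfolding t_def s_def by (auto intro: sum_nonneg)
    have f: "1 - t \<le> norm (1 - c*q^n)"
      using norm_triangle_ineq3[of 1 "c*q^n"] by (simp add: t_def norm_mult norm_power)
    have IH: "1 - s \<le> norm (qpoch c q n)" using Suc s_def by simp
    have "1 - (s + t) \<le> norm (qpoch c q n) * norm (1 - c*q^n)"
    proof (cases "1 - t \<ge> 0")
      case True
      have "1 - (s+t) \<le> (1 - s)*(1-t)" using t0 by (simp add: algebra_simps)
      also have "\<dots> \<le> norm (qpoch c q n) * (1 - t)" using IH True by (intro mult_right_mono) auto
      also have "\<dots> \<le> norm (qpoch c q n) * norm (1 - c*q^n)" using f by (intro mult_left_mono) auto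
      finally show ?thesis .
    next
      case False
      hence "1 - (s+t) \<le> 0" using t0 by simp
      also have "0 \<le> norm (qpoch c q n) * norm (1 - c*q^n)" by simp
      finally show ?thesis .
    qed
    then show ?case by (simp add: qpoch_Suc norm_mult s_def t_def)
  qed
  moreover have "(\<Sum>i<n. norm c * norm q ^ i) \<le> norm c / (1 - norm q)"
  proof -
    have "(\<Sum>i<n. norm c * norm q ^ i) = norm c * (\<Sum>i<n. norm q ^ i)" by (simp add: sum_distrib_left)
    also have "\<dots> \<le> norm c * (1/(1 - norm q))" using geo_le[of "norm q" n] q by (intro mult_left_mono) auto
    finally show ?thesis by simp
  qed
  ultimately show ?thesis by linarith
qed

lemma qpoch_lower:
  assumes q: "norm q < 1" and nz: "\<And>n. qpoch c q n \<noteq> 0"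
  shows "\<exists>\<delta>>0. \<forall>n. \<delta> \<le> norm (qpoch c q n)"
proof -
  have "(\<lambda>N. norm c * norm q ^ N / (1 - norm q)) \<longlonglongrightarrow> norm c * 0 / (1 - norm q)"
    using q by (intro tendsto_intros LIMSEQ_power_zero) auto
  hence "eventually (\<lambda>N. norm c * norm q ^ N / (1 - norm q) < 1/2) sequentially"
    by (intro order_tendstoD) auto
  then obtain N where N: "norm c * norm q ^ N / (1 - norm q) < 1/2" by (auto simp: eventually_sequentially)
  define \<delta> where "\<delta> = Min ((\<lambda>n. norm (qpoch c q n) / 2) ` {..N})"
  have dpos: "\<delta> > 0" unfolding \<delta>_def using nz by (subst Min_gr_iff) auto
  have dle: "\<delta> \<le> norm (qpoch c q n) / 2" if "n \<le> N" for n
    unfolding \<delta>_def using that by (intro Min_le) auto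
  have "\<delta> \<le> norm (qpoch c q n)" for n
  proof (cases "n \<le> N")
    case True thus ?thesis using dle[of n] dpos by simp
  next
    case False
    then obtain p where p: "n = N + p" by (metis le_add_diff_inverse nat_le_linear)
    have "1 - norm (c*q^N) / (1 - norm q) \<le> norm (qpoch (c*q^N) q p)" by (rule qpoch_weier[OF q])
    moreover have "norm (c*q^N) / (1 - norm q) < 1/2" using N by (simp add: norm_mult norm_power)
    ultimately have h: "1/2 \<le> norm (qpoch (c*q^N) q p)" by linarith
    have "\<delta> \<le> norm (qpoch c q N) / 2" using dle by simp
    also have "\<dots> \<le> norm (qpoch c q N) * norm (qpoch (c*q^N) q p)"
      using h by (simp add: mult_left_mono[of "1/2" _ "norm (qpoch c q N)", simplified])
    also have "\<dots> = norm (qpoch c q n)" by (simp add: p qpoch_add norm_mult)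
    finally show ?thesis .
  qed
  thus ?thesis using dpos by blast
qed

lemma qpoch_q_nz: assumes "norm q < 1" shows "qpoch q q n \<noteq> 0"
proof -
  have "1 - q*q^i \<noteq> 0" for i
  proof
    assume "1 - q*q^i = 0"
    hence "norm (q^(Suc i)) = 1" by (simp add: algebra_simps)
    moreover have "norm (q^(Suc i)) < 1" unfolding norm_power using assms by (intro power_less_one_iff[THEN iffD2]) auto
    ultimately show False by simp
  qed
  thus ?thesis unfolding qpoch_def by (simp add: prod_zero_iff)
qed

lemma qpoch_tendsto0:
  assumes "(f \<longlongrightarrow> 0) F"
  shows "((\<lambda>x. qpoch (f x) q n) \<longlongrightarrow> 1) F"
proof -
  have "((\<lambda>x. \<Prod>i<n. 1 - f x * q^i) \<longlongrightarrow> (\<Prod>i<n. 1 - 0 * q^i)) F"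
    by (intro tendsto_intros assms)
  thus ?thesis by (simp add: qpoch_def)
qed

lemma qpoch_shift_lower:
  assumes "\<And>n. \<delta> \<le> norm (qpoch c q n)" "norm (qpoch c q N) \<le> E" "E > 0" "\<delta> > 0"
  shows "\<delta>/E \<le> norm (qpoch (c*q^N) q n)"
proof -
  have "\<delta> \<le> norm (qpoch c q (N+n))" by (rule assms(1))
  also have "\<dots> = norm (qpoch c q N) * norm (qpoch (c*q^N) q n)" by (simp add: qpoch_add norm_mult)
  also have "\<dots> \<le> E * norm (qpoch (c*q^N) q n)" using assms(2) by (intro mult_right_mono) auto
  finally show ?thesis using assms(3) by (simp add: field_simps)
qed

lemma nm: fixes x y :: complex shows "norm x \<le> a \<Longrightarrow> norm y \<le> b \<Longrightarrow> norm (x * y) \<le> a * b"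
  by (simp add: norm_mult mult_mono')

lemma ninv: fixes d :: complex shows "\<delta> > 0 \<Longrightarrow> \<delta> \<le> norm d \<Longrightarrow> norm (inverse d) \<le> 1/\<delta>"
  by (simp add: norm_inverse le_imp_inverse_le divide_inverse)

lemma Fgen_factored: "Fgen a k q z j P m = (1-k*q^(2*(m+j))) * inverse (1-k) * qpoch (z*q^j) q m * P m
   * qpoch (q*a) q j * qpoch (q*a/z) q j * inverse (qpoch (q*k) q (j+m)) * inverse (qpoch (q*k/z) q (j+m))
   * qpoch (k/a) q m * qpoch k q (m+2*j) * inverse (qpoch q q m) * inverse (qpoch (a*q) q (m+2*j)) * (q*a/z)^m"
  unfolding Fgen_def by (simp add: divide_inverse mult_ac)

lemma Wgen_factored: "Wgen a k q z j P m = inverse (1-k) * qpoch (z*q^j) q m * P m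
   * qpoch (q*a) q j * qpoch (q*a/z) q j * inverse (qpoch (q*k) q (j+m)) * inverse (qpoch (q*k/z) q (j+m))
   * qpoch (k/a) q m * qpoch k q (m+2*j) * inverse (qpoch q q m) * inverse (qpoch (a*q) q (m+2*j))
   * (1 - q^m) * (1 - k*a*q^(m+2*j+1)/z) * inverse (1 - q*a/z) * (q*a/z)^m"
  unfolding Wgen_def by (simp add: divide_inverse mult_ac)

locale bnds =
  fixes a k q z :: complex and Kb \<delta> :: real
  assumes q: "norm q < 1" and Kb: "norm k \<le> Kb" "norm (k/a) \<le> Kb" "norm z \<le> Kb" "norm (q*a) \<le> Kb" "norm (q*a/z) \<le> Kb"
    and dpos: "\<delta> > 0"
    and low: "\<And>n. \<delta> \<le> norm (qpoch (q*k) q n)" "\<And>n. \<delta> \<le> norm (qpoch (q*k/z) q n)"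
      "\<And>n. \<delta> \<le> norm (qpoch q q n)" "\<And>n. \<delta> \<le> norm (qpoch (a*q) q n)" "\<delta> \<le> norm (1-k)"
begin

definition "E = exp (Kb/(1 - norm q))"

lemma qp: "norm c \<le> Kb \<Longrightarrow> norm (qpoch c q n) \<le> E"
  unfolding E_def by (rule qpoch_upper[OF q])

lemma nq: "norm (q^n) \<le> 1" using q by (simp add: norm_power power_le_one)

lemma zq: "norm (z*q^j) \<le> Kb"
proof -
  have "norm (z*q^j) \<le> norm z * 1" unfolding norm_mult using nq by (intro mult_left_mono) auto
  thus ?thesis using Kb by simp
qed

lemma Kb0: "0 \<le> Kb" using Kb(1) norm_ge_zero order_trans by blast

lemma Fgen_bnd:
  assumes P: "norm (P m) \<le> Pb"
  shows "norm (Fgen a k q z j P m) \<le> (1+Kb) * (1/\<delta>) * E * Pb * E * E * (1/\<delta>) * (1/\<delta>)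
     * E * E * (1/\<delta>) * (1/\<delta>) * norm (q*a/z)^m"
  unfolding Fgen_factored
proof (intro nm)
  show "norm (1 - k*q^(2*(m+j))) \<le> 1 + Kb"
  proof -
    have "norm (1 - k*q^(2*(m+j))) \<le> 1 + norm k * norm (q^(2*(m+j)))"
      using norm_triangle_ineq4[of 1 "k*q^(2*(m+j))"] by (simp add: norm_mult)
    also have "\<dots> \<le> 1 + Kb * 1" using Kb(1) nq Kb0 by (intro add_left_mono mult_mono) auto
    finally show ?thesis by simp
  qed
qed (use P low dpos in \<open>auto intro!: ninv qp zq simp: Kb norm_power\<close>)

lemma Wgen_bnd:
  assumes P: "norm (P m) \<le> Pb" and d2: "\<delta> \<le> norm (1 - q*a/z)"
  shows "norm (Wgen a k q z j P m) \<le> (1/\<delta>) * E * Pb * E * E * (1/\<delta>) * (1/\<delta>)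
     * E * E * (1/\<delta>) * (1/\<delta>) * 2 * (1 + Kb*Kb) * (1/\<delta>) * norm (q*a/z)^m"
  unfolding Wgen_factored
proof (intro nm)
  show "norm (1 - q^m) \<le> 2"
    using norm_triangle_ineq4[of 1 "q^m"] nq[of m] by simp
  show "norm (1 - k*a*q^(m+2*j+1)/z) \<le> 1 + Kb*Kb"
  proof -
    have e: "k*a*q^(m+2*j+1)/z = k * (q*a/z) * q^(m+2*j)" by (simp add: field_simps power_add)
    have e2: "norm (k*a*q^(m+2*j+1)/z) = norm k * norm (q*a/z) * norm (q^(m+2*j))"
      unfolding e norm_mult ..
    have "norm (1 - k*a*q^(m+2*j+1)/z) \<le> 1 + norm k * norm (q*a/z) * norm (q^(m+2*j))"
      using norm_triangle_ineq4[of 1 "k*a*q^(m+2*j+1)/z"] unfolding e2 by simp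
    also have "\<dots> \<le> 1 + Kb * Kb * 1" using Kb(1,5) nq Kb0 by (intro add_left_mono mult_mono) auto
    finally show ?thesis by simp
  qed
qed (use P low dpos d2 in \<open>auto intro!: ninv qp zq simp: Kb norm_power\<close>)

end

definition ND :: "complex \<Rightarrow> complex \<Rightarrow> complex \<Rightarrow> complex \<Rightarrow> bool" where
  "ND a k q z \<longleftrightarrow> q \<noteq> 0 \<and> norm q < 1 \<and> a \<noteq> 0 \<and> z \<noteq> 0 \<and> k \<noteq> 1 \<and> norm (q*a) < norm z \<and>
     (\<forall>n. qpoch (q*k) q n \<noteq> 0 \<and> qpoch (q*k/z) q n \<noteq> 0 \<and> qpoch (q*a) q n \<noteq> 0 \<and> qpoch (q*a/z) q n \<noteq> 0)"

lemma qpoch_one: "qpoch x q 1 = 1 - x" by (simp add: qpoch_def)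

lemma ND_facts:
  assumes "ND a k q z"
  shows "q \<noteq> 0" "norm q < 1" "a \<noteq> 0" "z \<noteq> 0" "1 - k \<noteq> 0" "norm (q*a) < norm z"
    "\<And>n. qpoch (q*k) q n \<noteq> 0" "\<And>n. qpoch (q*k/z) q n \<noteq> 0" "\<And>n. qpoch (q*a) q n \<noteq> 0"
    "\<And>n. qpoch (q*a/z) q n \<noteq> 0" "\<And>n. qpoch (a*q) q n \<noteq> 0"
    "1 - q*k \<noteq> 0" "1 - q*k/z \<noteq> 0" "1 - q*a \<noteq> 0" "1 - q*a/z \<noteq> 0" "norm (q*a/z) < 1"
    "\<And>n. qpoch q q n \<noteq> 0"
proof -
  note d = assms[unfolded ND_def]
  show "q \<noteq> 0" "norm q < 1" "a \<noteq> 0" "z \<noteq> 0" "1 - k \<noteq> 0" "norm (q*a) < norm z" using d by auto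
  show "\<And>n. qpoch (q*k) q n \<noteq> 0" "\<And>n. qpoch (q*k/z) q n \<noteq> 0" "\<And>n. qpoch (q*a) q n \<noteq> 0"
    "\<And>n. qpoch (q*a/z) q n \<noteq> 0" "\<And>n. qpoch (a*q) q n \<noteq> 0" using d by (auto simp: mult.commute)
  show "1 - q*k \<noteq> 0" "1 - q*k/z \<noteq> 0" "1 - q*a \<noteq> 0" "1 - q*a/z \<noteq> 0"
    using d by (metis qpoch_one)+
  show "norm (q*a/z) < 1" using d by (simp add: norm_divide divide_less_eq)
  show "\<And>n. qpoch q q n \<noteq> 0" using d qpoch_q_nz by blast
qed

lemma ND_shift:
  assumes "ND a k q z" shows "ND (a*q) (k*q) q z"
proof -
  note f = ND_facts[OF assms]
  have "norm (q*(a*q)) = norm q * norm (q*a)" by (simp add: norm_mult mult_ac)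
  also have "\<dots> \<le> 1 * norm (q*a)" using f(2) by (intro mult_right_mono) auto
  also have "\<dots> < norm z" using f(6) by simp
  finally have n: "norm (q*(a*q)) < norm z" .
  have s: "qpoch (q*(c*q)) q n \<noteq> 0" if "\<And>n. qpoch (q*c) q n \<noteq> 0" for c n
    using that[of "Suc n"] by (simp add: qpoch_Suc' mult_ac)
  have s': "qpoch (q*(c*q)/z) q n \<noteq> 0" if "\<And>n. qpoch (q*c/z) q n \<noteq> 0" for c n
    using that[of "Suc n"] by (simp add: qpoch_Suc' mult_ac)
  have "k*q \<noteq> 1" using f(12) by (simp add: mult.commute)
  thus ?thesis unfolding ND_def using f n s[OF f(7)] s'[OF f(8)] s[OF f(9)] s'[OF f(10)] by auto
qed

lemma ND_shiftN: assumes "ND a k q z" shows "ND (a*q^N) (k*q^N) q z"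
proof (induction N)
  case 0 thus ?case using assms by simp
next
  case (Suc N) thus ?case using ND_shift[OF Suc] by (simp add: mult_ac)
qed

lemma ND_bnds:
  assumes "ND a k q z"
  shows "\<exists>Kb \<delta>. bnds a k q z Kb \<delta> \<and> \<delta> \<le> norm (1 - q*a/z)"
proof -
  note f = ND_facts[OF assms]
  obtain d1 where d1: "d1 > 0" "\<And>n. d1 \<le> norm (qpoch (q*k) q n)" using qpoch_lower[OF f(2) f(7)] by blast
  obtain d2 where d2: "d2 > 0" "\<And>n. d2 \<le> norm (qpoch (q*k/z) q n)" using qpoch_lower[OF f(2) f(8)] by blast
  obtain d3 where d3: "d3 > 0" "\<And>n. d3 \<le> norm (qpoch q q n)" using qpoch_lower[OF f(2) f(17)] by blast
  obtain d4 where d4: "d4 > 0" "\<And>n. d4 \<le> norm (qpoch (a*q) q n)" using qpoch_lower[OF f(2) f(11)] by blast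
  define \<delta> where "\<delta> = Min {d1, d2, d3, d4, norm (1-k), norm (1 - q*a/z)}"
  define Kb where "Kb = Max {norm k, norm (k/a), norm z, norm (q*a), norm (q*a/z)}"
  have "\<delta> > 0" unfolding \<delta>_def using d1 d2 d3 d4 f(5) f(15) by simp
  moreover have "\<delta> \<le> d1" "\<delta> \<le> d2" "\<delta> \<le> d3" "\<delta> \<le> d4" "\<delta> \<le> norm (1-k)" "\<delta> \<le> norm (1 - q*a/z)"
    unfolding \<delta>_def by auto
  moreover have "norm k \<le> Kb" "norm (k/a) \<le> Kb" "norm z \<le> Kb" "norm (q*a) \<le> Kb" "norm (q*a/z) \<le> Kb"
    unfolding Kb_def by auto
  ultimately have "bnds a k q z Kb \<delta>"
    using d1(2) d2(2) d3(2) d4(2) f(2) unfolding bnds_def by (meson order_trans)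
  thus ?thesis using \<open>\<delta> \<le> norm (1 - q*a/z)\<close> by blast
qed

lemma ND_Fgen_bound:
  assumes "ND a k q z" "\<And>m. norm (P m) \<le> Pb"
  shows "\<exists>C. \<forall>m. norm (Fgen a k q z j P m) \<le> C * norm (q*a/z)^m \<and> norm (Wgen a k q z j P m) \<le> C * norm (q*a/z)^m"
proof -
  obtain Kb \<delta> where b: "bnds a k q z Kb \<delta>" and d: "\<delta> \<le> norm (1 - q*a/z)" using ND_bnds[OF assms(1)] by blast
  interpret bnds a k q z Kb \<delta> by (rule b)
  define C1 where "C1 = (1+Kb) * (1/\<delta>) * E * Pb * E * E * (1/\<delta>) * (1/\<delta>) * E * E * (1/\<delta>) * (1/\<delta>)"
  define C2 where "C2 = (1/\<delta>) * E * Pb * E * E * (1/\<delta>) * (1/\<delta>) * E * E * (1/\<delta>) * (1/\<delta>) * 2 * (1 + Kb*Kb) * (1/\<delta>)"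
  have "norm (Fgen a k q z j P m) \<le> C1 * norm (q*a/z)^m" for m
    using Fgen_bnd[where P=P and m=m and Pb=Pb and j=j, OF assms(2)] unfolding C1_def .
  moreover have "norm (Wgen a k q z j P m) \<le> C2 * norm (q*a/z)^m" for m
    using Wgen_bnd[where P=P and m=m and Pb=Pb and j=j, OF assms(2) d] unfolding C2_def .
  ultimately have "norm (Fgen a k q z j P m) \<le> max C1 C2 * norm (q*a/z)^m \<and> norm (Wgen a k q z j P m) \<le> max C1 C2 * norm (q*a/z)^m" for m
    by (meson max.cobounded1 max.cobounded2 mult_right_mono norm_ge_zero order_trans zero_le_power)
  thus ?thesis by blast
qed

lemma geom_bound_summable:
  fixes f :: "nat \<Rightarrow> complex"
  assumes "\<And>m. norm (f m) \<le> C * r^m" "0 \<le> r" "r < 1"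
  shows "summable (\<lambda>m. norm (f m))" "summable f"
proof -
  have g: "summable (\<lambda>m. C * r^m)" using assms by (intro summable_mult summable_geometric) auto
  show "summable (\<lambda>m. norm (f m))"
    by (rule summable_comparison_test[OF _ g]) (use assms(1) in auto)
  thus "summable f" by (rule summable_norm_cancel)
qed

lemma geom_bound_tendsto:
  fixes f :: "nat \<Rightarrow> complex"
  assumes "\<And>m. norm (f m) \<le> C * r^m" "0 \<le> r" "r < 1"
  shows "f \<longlonglongrightarrow> 0"
proof -
  have "summable f" by (rule geom_bound_summable(2)[OF assms])
  thus ?thesis by (rule summable_LIMSEQ_zero)
qed

lemma ND_Fgen_summable:
  assumes "ND a k q z" "\<And>m. norm (P m) \<le> Pb"
  shows "summable (\<lambda>m. Fgen a k q z j P (m+s))" "(\<lambda>m. Wgen a k q z j P (m+s)) \<longlonglongrightarrow> 0"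
proof -
  obtain C where C: "\<And>m. norm (Fgen a k q z j P m) \<le> C * norm (q*a/z)^m \<and> norm (Wgen a k q z j P m) \<le> C * norm (q*a/z)^m"
    using ND_Fgen_bound[where P=P and Pb=Pb and j=j, OF assms(1) assms(2)] by blast
  have r: "norm (q*a/z) < 1" using ND_facts(16)[OF assms(1)] .
  have C0: "0 \<le> C"
  proof -
    have "norm (Fgen a k q z j P 0) \<le> C" using C[of 0] by simp
    thus ?thesis using norm_ge_zero[of "Fgen a k q z j P 0"] by linarith
  qed
  have pw: "C * norm (q*a/z)^(m+s) \<le> C * norm (q*a/z)^m" for m
    using r C0 by (intro mult_left_mono power_decreasing) auto
  show "summable (\<lambda>m. Fgen a k q z j P (m+s))"
  proof (rule geom_bound_summable(2)[of _ C "norm (q*a/z)"])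
    fix m show "norm (Fgen a k q z j P (m+s)) \<le> C * norm (q*a/z)^m" using C[of "m+s"] pw[of m] by linarith
  qed (use r in auto)
  show "(\<lambda>m. Wgen a k q z j P (m+s)) \<longlonglongrightarrow> 0"
  proof (rule geom_bound_tendsto[of _ C "norm (q*a/z)"])
    fix m show "norm (Wgen a k q z j P (m+s)) \<le> C * norm (q*a/z)^m" using C[of "m+s"] pw[of m] by linarith
  qed (use r in auto)
qed

lemma shift_sum:
  assumes nd: "ND a k q z" and Pb: "\<And>m. norm (P m) \<le> Pb"
    and P: "\<And>m. P (Suc (m+s)) = P (m+s) * (1 - q^(m+s)*q^j)"
  shows "(\<lambda>m. Fgen (a*q) (k*q) q z j P (m+s)) sums ((\<Sum>m. Fgen a k q z j P (m+s)) - Wgen a k q z j P s)"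
proof -
  note f = ND_facts[OF nd]
  have key: "Fgen (a*q) (k*q) q z j P (m+s) = Fgen a k q z j P (m+s) + (Wgen a k q z j P (Suc m + s) - Wgen a k q z j P (m+s))" for m
    using KEY[OF f(1) f(3) f(4) f(5) f(12) f(13) f(14) f(15) f(7) f(8) f(17) f(11) P[of m]] by (simp add: algebra_simps)
  have s1: "(\<lambda>m. Fgen a k q z j P (m+s)) sums (\<Sum>m. Fgen a k q z j P (m+s))"
    using ND_Fgen_summable(1)[where j=j and s=s, OF nd Pb] by (rule summable_sums)
  have s2: "(\<lambda>m. Wgen a k q z j P (Suc m + s) - Wgen a k q z j P (m+s)) sums (0 - Wgen a k q z j P (0+s))"
    using telescope_sums[OF ND_Fgen_summable(2)[where j=j and s=s, OF nd Pb]] by simp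
  show ?thesis using sums_add[OF s1 s2] unfolding key by simp
qed

lemma unif_bound:
  assumes nd: "ND a k q z" and Pb: "\<And>m. norm (P m) \<le> Pb"
  shows "\<exists>N0 C. \<forall>N\<ge>N0. \<forall>m. norm (Fgen (a*q^N) (k*q^N) q z j P m) \<le> C * (norm (q*a/z) * norm q ^ N)^m"
proof -
  note f = ND_facts[OF nd]
  obtain Kb \<delta> where b: "bnds a k q z Kb \<delta>" using ND_bnds[OF nd] by blast
  interpret b0: bnds a k q z Kb \<delta> by (rule b)
  have q: "norm q < 1" by (rule f(2))
  obtain d1 where d1: "d1 > 0" "\<And>n. d1 \<le> norm (qpoch (q*k) q n)" using qpoch_lower[OF f(2) f(7)] by blast
  obtain d2 where d2: "d2 > 0" "\<And>n. d2 \<le> norm (qpoch (q*k/z) q n)" using qpoch_lower[OF f(2) f(8)] by blast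
  obtain d3 where d3: "d3 > 0" "\<And>n. d3 \<le> norm (qpoch q q n)" using qpoch_lower[OF f(2) f(17)] by blast
  obtain d4 where d4: "d4 > 0" "\<And>n. d4 \<le> norm (qpoch (a*q) q n)" using qpoch_lower[OF f(2) f(11)] by blast
  define E1 where "E1 = exp (norm (q*k)/(1 - norm q))"
  define E2 where "E2 = exp (norm (q*k/z)/(1 - norm q))"
  define E4 where "E4 = exp (norm (a*q)/(1 - norm q))"
  have E: "E1 > 0" "E2 > 0" "E4 > 0" unfolding E1_def E2_def E4_def by auto
  define \<delta>' where "\<delta>' = Min {d1/E1, d2/E2, d3, d4/E4, 1/2}"
  have dpos: "\<delta>' > 0" unfolding \<delta>'_def using d1 d2 d3 d4 E by simp
  have "(\<lambda>N. norm k * norm q ^ N) \<longlonglongrightarrow> norm k * 0"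
    using q by (intro tendsto_intros LIMSEQ_power_zero) auto
  hence "eventually (\<lambda>N. norm k * norm q ^ N < 1/2) sequentially"
    by (intro order_tendstoD) auto
  then obtain N0 where N0: "\<And>N. N \<ge> N0 \<Longrightarrow> norm k * norm q ^ N < 1/2" by (auto simp: eventually_sequentially)
  have nq: "norm q ^ N \<le> 1" for N using q by (simp add: power_le_one)
  have sh: "norm (c*q^N) \<le> B" if "norm c \<le> B" for c :: complex and B N
  proof -
    have "norm (c*q^N) = norm c * norm q ^ N" by (simp add: norm_mult norm_power)
    also have "\<dots> \<le> norm c * 1" using nq[of N] by (intro mult_left_mono) auto
    finally show ?thesis using that by simp
  qed
  have bN: "bnds (a*q^N) (k*q^N) q z Kb \<delta>'" if N: "N \<ge> N0" for N
  proof
    show "norm q < 1" by (rule q)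
    show "0 < \<delta>'" by (rule dpos)
    show "norm (k*q^N) \<le> Kb"
      by (rule sh[OF b0.Kb(1)])
    show "norm (k*q^N/(a*q^N)) \<le> Kb" using b0.Kb(2) f(1) by simp
    show "norm z \<le> Kb" by (rule b0.Kb(3))
    show "norm (q*(a*q^N)) \<le> Kb"
      using sh[OF b0.Kb(4), of N] by (simp add: mult_ac)
    show "norm (q*(a*q^N)/z) \<le> Kb"
      using sh[OF b0.Kb(5), of N] by (simp add: mult_ac)
    fix n
    have "d1/E1 \<le> norm (qpoch ((q*k)*q^N) q n)"
      by (rule qpoch_shift_lower[OF d1(2)]) (use E d1 in \<open>auto simp: E1_def intro: qpoch_upper[OF q]\<close>)
    thus "\<delta>' \<le> norm (qpoch (q*(k*q^N)) q n)" unfolding \<delta>'_def by (simp add: mult_ac)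
    have "d2/E2 \<le> norm (qpoch ((q*k/z)*q^N) q n)"
      by (rule qpoch_shift_lower[OF d2(2)]) (use E d2 in \<open>auto simp: E2_def intro: qpoch_upper[OF q]\<close>)
    thus "\<delta>' \<le> norm (qpoch (q*(k*q^N)/z) q n)" unfolding \<delta>'_def by (simp add: mult_ac)
    have "\<delta>' \<le> d3" unfolding \<delta>'_def by simp
    thus "\<delta>' \<le> norm (qpoch q q n)" using d3(2)[of n] by linarith
    have "d4/E4 \<le> norm (qpoch ((a*q)*q^N) q n)"
      by (rule qpoch_shift_lower[OF d4(2)]) (use E d4 in \<open>auto simp: E4_def intro: qpoch_upper[OF q]\<close>)
    thus "\<delta>' \<le> norm (qpoch (a*q^N*q) q n)" unfolding \<delta>'_def by (simp add: mult_ac)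
  next
    have "norm (1 - k*q^N) \<ge> 1 - norm (k*q^N)" using norm_triangle_ineq3[of 1 "k*q^N"] by simp
    moreover have "norm (k*q^N) < 1/2" using N0[OF N] by (simp add: norm_mult norm_power)
    ultimately show "\<delta>' \<le> norm (1 - k*q^N)" unfolding \<delta>'_def by simp
  qed
  define C where "C = (1+Kb) * (1/\<delta>') * b0.E * Pb * b0.E * b0.E * (1/\<delta>') * (1/\<delta>') * b0.E * b0.E * (1/\<delta>') * (1/\<delta>')"
  have "norm (Fgen (a*q^N) (k*q^N) q z j P m) \<le> C * (norm (q*a/z) * norm q ^ N)^m" if "N \<ge> N0" for N m
  proof -
    interpret bN: bnds "a*q^N" "k*q^N" q z Kb \<delta>' by (rule bN[OF that])
    have "bN.E = b0.E" unfolding bN.E_def b0.E_def ..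
    moreover have "norm (q*(a*q^N)/z) = norm (q*a/z) * norm q ^ N" by (simp add: norm_mult norm_divide norm_power)
    ultimately show ?thesis using bN.Fgen_bnd[where P=P and m=m and Pb=Pb and j=j, OF Pb] unfolding C_def by simp
  qed
  thus ?thesis by blast
qed

lemma tannery_bound_ev:
  assumes "\<forall>N\<ge>N0. \<forall>m. norm (F m N) \<le> M m"
  shows "eventually (\<lambda>(m,N). norm (F m N) \<le> M m) (at_top \<times>\<^sub>F sequentially)"
proof -
  have "eventually (\<lambda>x. True \<and> snd x \<ge> N0) (at_top \<times>\<^sub>F sequentially)"
    by (intro eventually_prodI) (auto simp: eventually_sequentially)
  thus ?thesis by eventually_elim (use assms in auto)
qed

lemma shift_limits:
  assumes nd: "ND a k q z" and Pb: "\<And>m. norm (P m) \<le> Pb"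
  obtains C where "summable (\<lambda>m. C * norm (q*a/z)^m)"
    "\<exists>N0. \<forall>N\<ge>N0. \<forall>m. norm (Fgen (a*q^N) (k*q^N) q z j P m) \<le> C * norm (q*a/z)^m"
    "\<And>m. m \<ge> 1 \<Longrightarrow> (\<lambda>N. Fgen (a*q^N) (k*q^N) q z j P m) \<longlonglongrightarrow> 0"
proof -
  note f = ND_facts[OF nd]
  obtain N0 C where C: "\<And>N m. N \<ge> N0 \<Longrightarrow> norm (Fgen (a*q^N) (k*q^N) q z j P m) \<le> C * (norm (q*a/z) * norm q ^ N)^m"
    using unif_bound[where P=P and Pb=Pb and j=j, OF nd Pb] by blast
  define r where "r = norm (q*a/z)"
  have r: "0 \<le> r" "r < 1" using f(16) by (auto simp: r_def)
  have nq: "norm q ^ N \<le> 1" for N using f(2) by (simp add: power_le_one)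
  have b1: "norm (Fgen (a*q^N) (k*q^N) q z j P m) \<le> abs C * r^m" if "N \<ge> N0" for N m
  proof -
    have "r * norm q ^ N \<le> r * 1" using r nq[of N] by (intro mult_left_mono) auto
    hence "(r * norm q ^ N)^m \<le> r^m" using r by (intro power_mono) auto
    moreover have "C * (r * norm q ^ N)^m \<le> abs C * (r * norm q ^ N)^m"
      using r by (intro mult_right_mono) auto
    ultimately have "C * (r * norm q ^ N)^m \<le> abs C * r^m"
      by (meson abs_ge_zero mult_left_mono order_trans)
    thus ?thesis using C[OF that, of m] unfolding r_def by linarith
  qed
  show ?thesis
  proof
    show "summable (\<lambda>m. abs C * norm (q*a/z)^m)" using r unfolding r_def by (intro summable_mult summable_geometric) auto
    show "\<exists>N0. \<forall>N\<ge>N0. \<forall>m. norm (Fgen (a*q^N) (k*q^N) q z j P m) \<le> abs C * norm (q*a/z)^m"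
      using b1 unfolding r_def by blast
    fix m :: nat assume m: "m \<ge> 1"
    show "(\<lambda>N. Fgen (a*q^N) (k*q^N) q z j P m) \<longlonglongrightarrow> 0"
    proof (rule tendsto_0_le[of "\<lambda>N. q^N" _ _ "abs C * r^m"])
      show "(\<lambda>N. q^N) \<longlonglongrightarrow> 0" using f(2) by (rule LIMSEQ_power_zero)
      have "norm (Fgen (a*q^N) (k*q^N) q z j P m) \<le> norm (q^N) * (abs C * r^m)" if "N \<ge> N0" for N
      proof -
        have "(r * norm q ^ N)^m = r^m * (norm q ^ N)^m" by (simp add: power_mult_distrib)
        also have "\<dots> \<le> r^m * norm q ^ N"
        proof -
          have "(norm q ^ N)^m \<le> (norm q^N)^1" using m nq[of N] by (intro power_decreasing) auto
          thus ?thesis using r by (intro mult_left_mono) auto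
        qed
        finally have x: "(r * norm q ^ N)^m \<le> r^m * norm q ^ N" .
        moreover have "C * (r * norm q ^ N)^m \<le> abs C * (r * norm q ^ N)^m"
          using r by (intro mult_right_mono) auto
        ultimately have "C * (r * norm q ^ N)^m \<le> abs C * (r^m * norm q ^ N)"
          by (meson abs_ge_zero mult_left_mono order_trans)
        thus ?thesis using C[OF that, of m] unfolding r_def by (simp add: norm_power mult_ac)
      qed
      thus "eventually (\<lambda>N. norm (Fgen (a*q^N) (k*q^N) q z j P m) \<le> norm (q^N) * (abs C * r^m)) sequentially"
        by (auto simp: eventually_sequentially)
    qed
  qed
qed

definition W1f :: "complex \<Rightarrow> complex \<Rightarrow> complex \<Rightarrow> complex \<Rightarrow> complex" where
  "W1f a k q z = (1-z)*(q*a/z)*(1-k/a)*(1-k*a*q*q/z)/((1-q*k)*(1-q*k/z)*(1-a*q)*(1-q*a/z))"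

definition gg :: "complex \<Rightarrow> complex" where "gg c = c/(1-c)"

lemma t1:
  fixes uu vv z :: complex
  assumes "z \<noteq> 0" "vv \<noteq> 0" "uu \<noteq> 1" "vv \<noteq> 1" "uu \<noteq> z" "vv \<noteq> z"
  shows "(1-z)*(vv/z)*(1-uu/vv)*(1-uu * vv/z)/((1-uu)*(1-uu/z)*(1-vv)*(1-vv/z)) = uu/(1-uu)+(vv/z)/(1-vv/z) - (uu/z)/(1-uu/z) - vv/(1-vv)"
proof -
  have a: "1-uu/z = (z-uu)/z" "1-vv/z = (z-vv)/z" "1-uu/vv = (vv-uu)/vv" "1-uu * vv/z = (z-uu * vv)/z" using assms by (auto simp: field_simps)
  have b: "1-uu \<noteq> 0" "1-vv\<noteq>0" "z-uu\<noteq>0" "z-vv\<noteq>0" using assms by auto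
  show ?thesis unfolding a using assms b by (simp add: divide_simps) algebra
qed

lemma W1f_gg:
  assumes "q \<noteq> 0" "a \<noteq> 0" "z \<noteq> 0" "1-q*k \<noteq> 0" "1-q*k/z \<noteq> 0" "1-a*q \<noteq> 0" "1-q*a/z \<noteq> 0"
  shows "W1f a k q z = gg (q*k) + gg (q*a/z) - gg (q*k/z) - gg (q*a)"
proof -
  have e: "q*k/(q*a) = k/a" "(q*k)*(q*a) = k*a*q*q" "q*a = a*q" using assms by (auto simp: field_simps)
  have "W1f a k q z = (1-z)*((q*a)/z)*(1-(q*k)/(q*a))*(1-(q*k)*(q*a)/z)/((1-q*k)*(1-(q*k)/z)*(1-q*a)*(1-(q*a)/z))"
    unfolding W1f_def using assms by (simp add: e)
  also have "... = gg (q*k) + gg (q*a/z) - gg (q*k/z) - gg (q*a)"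
    unfolding gg_def by (rule t1) (use assms in \<open>auto simp: field_simps\<close>)
  finally show ?thesis .
qed

lemma gg_comb: assumes "1 - c \<noteq> 0" "1 + c \<noteq> 0"
  shows "gg c + gg (-c) - 2 * gg (c^2) = 0"
proof -
  have "1 - c^2 = (1-c)*(1+c)" by (simp add: algebra_simps power2_eq_square)
  hence "1 - c^2 \<noteq> 0" using assms by simp
  thus ?thesis unfolding gg_def using assms by (simp add: divide_simps) (simp add: algebra_simps power2_eq_square)
qed

lemma w1comb:
  fixes a k q z :: complex
  assumes "q \<noteq> 0" "a \<noteq> 0" "z \<noteq> 0" "1-q*k \<noteq> 0" "1-q*k/z \<noteq> 0" "1-a*q \<noteq> 0" "1-q*a/z \<noteq> 0"
    "1+q*k \<noteq> 0" "1+q*k/z \<noteq> 0" "1+a*q \<noteq> 0" "1+q*a/z \<noteq> 0"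
  shows "W1f a k q z + W1f (-a) (-k) q z - 2 * W1f (a^2) (k^2) (q^2) (z^2) = 0"
proof -
  have sq: "1 - c^2 \<noteq> 0" if "1 - c \<noteq> 0" "1 + c \<noteq> 0" for c :: complex
  proof -
    have "1 - c^2 = (1-c)*(1+c)" by (simp add: algebra_simps power2_eq_square)
    thus ?thesis using that by simp
  qed
  have p: "q^2*k^2 = (q*k)^2" "q^2*k^2/z^2 = (q*k/z)^2" "a^2*q^2 = (a*q)^2" "q^2*a^2/z^2 = (q*a/z)^2"
    by (simp_all add: power_mult_distrib power_divide)
  have e1: "W1f a k q z = gg (q*k) + gg (q*a/z) - gg (q*k/z) - gg (q*a)"
    by (rule W1f_gg) (use assms in auto)
  have e2: "W1f (-a) (-k) q z = gg (-(q*k)) + gg (-(q*a/z)) - gg (-(q*k/z)) - gg (-(q*a))"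
    using W1f_gg[of q "-a" z "-k"] assms by simp
  have e3: "W1f (a^2) (k^2) (q^2) (z^2) = gg ((q*k)^2) + gg ((q*a/z)^2) - gg ((q*k/z)^2) - gg ((q*a)^2)"
  proof -
    have h1: "1 - (q*k)^2 \<noteq> 0" by (rule sq) (use assms in auto)
    have h2: "1 - (q*k/z)^2 \<noteq> 0" by (rule sq) (use assms in auto)
    have h3: "1 - (a*q)^2 \<noteq> 0" by (rule sq) (use assms in auto)
    have h4: "1 - (q*a/z)^2 \<noteq> 0" by (rule sq) (use assms in auto)
    have h: "1 - q^2*k^2 \<noteq> 0" "1 - q^2*k^2/z^2 \<noteq> 0" "1 - a^2*q^2 \<noteq> 0" "1 - q^2*a^2/z^2 \<noteq> 0"
      using h1 h2 h3 h4 by (simp_all only: power_mult_distrib power_divide not_False_eq_True)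
    have "W1f (a^2) (k^2) (q^2) (z^2) = gg (q^2*k^2) + gg (q^2*a^2/z^2) - gg (q^2*k^2/z^2) - gg (q^2*a^2)"
      by (rule W1f_gg[OF _ _ _ h(1) h(2) h(3) h(4)]) (use assms in auto)
    thus ?thesis by (simp add: power_mult_distrib power_divide mult.commute)
  qed
  have c1: "gg (q*k) + gg (-(q*k)) - 2 * gg ((q*k)^2) = 0" by (rule gg_comb) (use assms in auto)
  have c2: "gg (q*a/z) + gg (-(q*a/z)) - 2 * gg ((q*a/z)^2) = 0" by (rule gg_comb) (use assms in auto)
  have c3: "gg (q*k/z) + gg (-(q*k/z)) - 2 * gg ((q*k/z)^2) = 0" by (rule gg_comb) (use assms in auto)
  have c4: "gg (q*a) + gg (-(q*a)) - 2 * gg ((q*a)^2) = 0" by (rule gg_comb) (use assms in \<open>auto simp: mult.commute\<close>)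
  have lin: "A + A' - 2*A2 = 0 \<Longrightarrow> B + B' - 2*B2 = 0 \<Longrightarrow> C + C' - 2*C2 = 0 \<Longrightarrow> D + D' - 2*D2 = 0 \<Longrightarrow>
     (A + B - C - D) + (A' + B' - C' - D') - 2 * (A2 + B2 - C2 - D2) = (0::complex)" for A B C D A' B' C' D' A2 B2 C2 D2
    by (simp add: algebra_simps)
  show ?thesis unfolding e1 e2 e3 by (rule lin[OF c1 c2 c3 c4])
qed

lemma Fgen0_lim:
  assumes q: "norm q < 1" and a: "a \<noteq> 0" and q0: "q \<noteq> 0"
  shows "(\<lambda>N. Fgen (a*q^N) (k*q^N) q z j P 0) \<longlonglongrightarrow> P 0"
proof -
  have t0: "(\<lambda>N. q^N) \<longlonglongrightarrow> 0" using q by (rule LIMSEQ_power_zero)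
  have tc: "(\<lambda>N. c * q^N) \<longlonglongrightarrow> 0" for c :: complex using tendsto_mult[OF tendsto_const[of c] t0] by simp
  have Q: "(\<lambda>N. qpoch (c * q^N) q n) \<longlonglongrightarrow> 1" for c n by (rule qpoch_tendsto0[OF tc])
  have e: "Fgen (a*q^N) (k*q^N) q z j P 0 =
     (1 - (k*q^(2*j)) * q^N) / (1 - k*q^N) * P 0 * qpoch ((q*a) * q^N) q j * qpoch ((q*a/z) * q^N) q j
      / (qpoch ((q*k)*q^N) q j * qpoch ((q*k/z)*q^N) q j) * qpoch (k*q^N) q (2*j) / qpoch ((a*q)*q^N) q (2*j)" for N
    using a q0 by (simp add: Fgen_def mult_ac)
  have "(\<lambda>N. (1 - (k*q^(2*j)) * q^N) / (1 - k*q^N) * P 0 * qpoch ((q*a) * q^N) q j * qpoch ((q*a/z) * q^N) q j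
      / (qpoch ((q*k)*q^N) q j * qpoch ((q*k/z)*q^N) q j) * qpoch (k*q^N) q (2*j) / qpoch ((a*q)*q^N) q (2*j))
     \<longlonglongrightarrow> (1 - 0) / (1 - 0) * P 0 * 1 * 1 / (1 * 1) * 1 / 1"
    by (intro tendsto_intros tc Q) auto
  thus ?thesis unfolding e by simp
qed

lemma sumF1:
  assumes nd: "ND a k q z"
  shows "(\<lambda>m. Fgen a k q z j (qpoch (q^j) q) m) sums 1"
proof -
  note f = ND_facts[OF nd]
  define P where "P = qpoch (q^j) q"
  define Pb where "Pb = exp (1/(1 - norm q))"
  have Pb: "norm (P m) \<le> Pb" for m unfolding P_def Pb_def
    by (rule qpoch_upper[OF f(2)]) (use f(2) in \<open>simp add: norm_power power_le_one\<close>)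
  have Prec: "P (Suc (m+0)) = P (m+0) * (1 - q^(m+0)*q^j)" for m by (simp add: P_def qpoch_Suc mult_ac)
  define S where "S N = (\<Sum>m. Fgen (a*q^N) (k*q^N) q z j P m)" for N
  have step: "S (Suc N) = S N" for N
  proof -
    have ndN: "ND (a*q^N) (k*q^N) q z" by (rule ND_shiftN[OF nd])
    have "(\<lambda>m. Fgen (a*q^N*q) (k*q^N*q) q z j P (m+0)) sums ((\<Sum>m. Fgen (a*q^N) (k*q^N) q z j P (m+0)) - Wgen (a*q^N) (k*q^N) q z j P 0)"
      by (rule shift_sum[where P=P and Pb=Pb, OF ndN Pb Prec])
    moreover have "Wgen (a*q^N) (k*q^N) q z j P 0 = 0" by (simp add: Wgen_def)
    ultimately have "(\<lambda>m. Fgen (a*q^Suc N) (k*q^Suc N) q z j P m) sums S N"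
      by (simp add: S_def mult_ac)
    thus ?thesis unfolding S_def by (simp add: sums_iff)
  qed
  have SN: "S N = S 0" for N by (induction N) (simp_all add: step)
  obtain C where C1: "summable (\<lambda>m. C * norm (q*a/z)^m)"
    and C2': "\<exists>N0. \<forall>N\<ge>N0. \<forall>m. norm (Fgen (a*q^N) (k*q^N) q z j P m) \<le> C * norm (q*a/z)^m"
    and C3: "\<And>m. m \<ge> 1 \<Longrightarrow> (\<lambda>N. Fgen (a*q^N) (k*q^N) q z j P m) \<longlonglongrightarrow> 0"
    using shift_limits[where P=P and Pb=Pb and j=j, OF nd Pb] by blast
  obtain N0 where "\<forall>N\<ge>N0. \<forall>m. norm (Fgen (a*q^N) (k*q^N) q z j P m) \<le> C * norm (q*a/z)^m" using C2' by blast
  hence C2: "eventually (\<lambda>(m,N). norm (Fgen (a*q^N) (k*q^N) q z j P m) \<le> C * norm (q*a/z)^m) (at_top \<times>\<^sub>F sequentially)"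
    by (rule tannery_bound_ev)
  define b :: "nat \<Rightarrow> complex" where "b m = (if m = 0 then 1 else 0)" for m
  have lim: "(\<lambda>N. Fgen (a*q^N) (k*q^N) q z j P m) \<longlonglongrightarrow> b m" for m
  proof (cases "m = 0")
    case True
    have "P 0 = 1" by (simp add: P_def)
    thus ?thesis using Fgen0_lim[OF f(2) f(3) f(1), of k z j P] True by (simp add: b_def)
  next
    case False thus ?thesis using C3[of m] by (simp add: b_def)
  qed
  have bs: "b sums 1" using sums_single[of 0 "\<lambda>_. 1::complex"] by (simp add: b_def[abs_def])
  have "(\<lambda>N. S N) \<longlonglongrightarrow> suminf b"
    unfolding S_def using tannerys_theorem[OF lim C2 C1] by auto
  hence "S \<longlonglongrightarrow> 1" using bs by (simp add: sums_iff)
  moreover have "S = (\<lambda>N. S 0)" using SN by auto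
  ultimately have "(\<lambda>N. S 0) \<longlonglongrightarrow> 1" by simp
  hence "S 0 = 1" by (simp add: LIMSEQ_const_iff)
  moreover have "summable (\<lambda>m. Fgen a k q z j P (m+0))" by (rule ND_Fgen_summable(1)[where P=P and Pb=Pb, OF nd Pb])
  ultimately show ?thesis unfolding P_def[symmetric] using summable_sums by (fastforce simp: S_def)
qed


definition P0 :: "complex \<Rightarrow> nat \<Rightarrow> complex" where "P0 q n = qpoch q q (n-1)"

definition TT :: "complex \<Rightarrow> complex \<Rightarrow> complex \<Rightarrow> complex \<Rightarrow> complex" where
  "TT a k q z = (\<Sum>m. Fgen a k q z 0 (P0 q) (m+1))"

lemma Wgen1: assumes k: "1 - k \<noteq> 0" and q: "1 - q \<noteq> 0"
  shows "Wgen a k q z 0 (P0 q) 1 = W1f a k q z"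
proof -
  have e: "Wgen a k q z 0 (P0 q) 1 = W1f a k q z * ((1-k) * inverse (1-k)) * ((1-q) * inverse (1-q))"
    unfolding Wgen_def W1f_def P0_def qpoch_def by (simp add: divide_inverse mult_ac power2_eq_square)
  show ?thesis unfolding e using k q by simp
qed

lemma TT_facts:
  assumes nd: "ND a k q z"
  shows "TT (a*q^Suc N) (k*q^Suc N) q z = TT (a*q^N) (k*q^N) q z - W1f (a*q^N) (k*q^N) q z"
    "(\<lambda>N. TT (a*q^N) (k*q^N) q z) \<longlonglongrightarrow> 0"
proof -
  note f = ND_facts[OF nd]
  define P where "P = P0 q"
  define Pb where "Pb = exp (1/(1 - norm q))"
  have Pb: "norm (P m) \<le> Pb" for m unfolding P_def Pb_def P0_def
    by (rule qpoch_upper[OF f(2)]) (use f(2) in simp)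
  have Prec: "P (Suc (m+1)) = P (m+1) * (1 - q^(m+1)*q^0)" for m by (simp add: P_def P0_def qpoch_Suc mult_ac)
  have ndN: "ND (a*q^N) (k*q^N) q z" by (rule ND_shiftN[OF nd])
  have q1: "1 - q \<noteq> 0" using f(17)[of 1] by (simp add: qpoch_def)
  have "(\<lambda>m. Fgen (a*q^N*q) (k*q^N*q) q z 0 P (m+1)) sums ((\<Sum>m. Fgen (a*q^N) (k*q^N) q z 0 P (m+1)) - Wgen (a*q^N) (k*q^N) q z 0 P 1)"
    by (rule shift_sum[where P=P and Pb=Pb, OF ndN Pb Prec])
  moreover have "Wgen (a*q^N) (k*q^N) q z 0 P 1 = W1f (a*q^N) (k*q^N) q z"
    unfolding P_def using ND_facts[OF ndN] q1 by (intro Wgen1) (auto simp: mult.commute)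
  ultimately have "(\<lambda>m. Fgen (a*q^Suc N) (k*q^Suc N) q z 0 P (m+1)) sums (TT (a*q^N) (k*q^N) q z - W1f (a*q^N) (k*q^N) q z)"
    by (simp add: TT_def P_def mult_ac)
  thus "TT (a*q^Suc N) (k*q^Suc N) q z = TT (a*q^N) (k*q^N) q z - W1f (a*q^N) (k*q^N) q z"
    unfolding TT_def P_def[symmetric] by (simp add: sums_iff)
  obtain C where C1: "summable (\<lambda>m. C * norm (q*a/z)^m)"
    and C2': "\<exists>N0. \<forall>N\<ge>N0. \<forall>m. norm (Fgen (a*q^N) (k*q^N) q z 0 P m) \<le> C * norm (q*a/z)^m"
    and C3: "\<And>m. m \<ge> 1 \<Longrightarrow> (\<lambda>N. Fgen (a*q^N) (k*q^N) q z 0 P m) \<longlonglongrightarrow> 0"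
    using shift_limits[where P=P and Pb=Pb and j=0, OF nd Pb] by blast
  obtain N0 where N0: "\<forall>N\<ge>N0. \<forall>m. norm (Fgen (a*q^N) (k*q^N) q z 0 P m) \<le> C * norm (q*a/z)^m" using C2' by blast
  have C2: "eventually (\<lambda>(m,N). norm (Fgen (a*q^N) (k*q^N) q z 0 P (m+1)) \<le> C * norm (q*a/z)^(m+1)) (at_top \<times>\<^sub>F sequentially)"
  proof (rule tannery_bound_ev[of N0], intro allI impI)
    fix N m assume "N \<ge> N0" thus "norm (Fgen (a*q^N) (k*q^N) q z 0 P (m+1)) \<le> C * norm (q*a/z)^(m+1)"
      using N0 by blast
  qed
  have C1': "summable (\<lambda>m. C * norm (q*a/z)^(m+1))" using summable_Suc_iff[of "\<lambda>m. C * norm (q*a/z)^m"] C1 by simp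
  have lim: "(\<lambda>N. Fgen (a*q^N) (k*q^N) q z 0 P (m+1)) \<longlonglongrightarrow> 0" for m using C3[of "m+1"] by simp
  have "(\<lambda>N. TT (a*q^N) (k*q^N) q z) \<longlonglongrightarrow> suminf (\<lambda>m. 0::complex)"
    unfolding TT_def P_def[symmetric] using tannerys_theorem[OF lim C2 C1'] by auto
  thus "(\<lambda>N. TT (a*q^N) (k*q^N) q z) \<longlonglongrightarrow> 0" by simp
qed

lemma TT_comb:
  assumes n1: "ND a k q z" and n2: "ND (-a) (-k) q z" and n3: "ND (a^2) (k^2) (q^2) (z^2)"
  shows "TT a k q z + TT (-a) (-k) q z - 2 * TT (a^2) (k^2) (q^2) (z^2) = 0"
proof -
  define D where "D N = TT (a*q^N) (k*q^N) q z + TT ((-a)*q^N) ((-k)*q^N) q z - 2 * TT (a^2*(q^2)^N) (k^2*(q^2)^N) (q^2) (z^2)" for N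
  have step: "D (Suc N) = D N" for N
  proof -
    note s1 = TT_facts(1)[OF n1, of N]
    note s2 = TT_facts(1)[OF n2, of N]
    note s3 = TT_facts(1)[OF n3, of N]
    note f1 = ND_facts[OF ND_shiftN[OF n1, of N]]
    note f2 = ND_facts[OF ND_shiftN[OF n2, of N]]
    have w: "W1f (a*q^N) (k*q^N) q z + W1f (-(a*q^N)) (-(k*q^N)) q z - 2 * W1f ((a*q^N)^2) ((k*q^N)^2) (q^2) (z^2) = 0"
      by (rule w1comb) (use f1 f2 in \<open>auto simp: mult.commute\<close>)
    have e: "(-a)*q^N = -(a*q^N)" "(-k)*q^N = -(k*q^N)" "a^2*(q^2)^N = (a*q^N)^2" "k^2*(q^2)^N = (k*q^N)^2"
      by (simp_all add: power_mult_distrib power_mult[symmetric] mult.commute)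
    show ?thesis unfolding D_def s1 s2 s3 using w unfolding e by (simp add: algebra_simps)
  qed
  have DN: "D N = D 0" for N by (induction N) (simp_all add: step)
  have "D \<longlonglongrightarrow> 0 + 0 - 2 * 0"
    unfolding D_def by (intro tendsto_intros TT_facts(2)[OF n1] TT_facts(2)[OF n2] TT_facts(2)[OF n3])
  moreover have "D = (\<lambda>N. D 0)" using DN by auto
  ultimately have "(\<lambda>N. D 0) \<longlonglongrightarrow> 0" by simp
  hence "D 0 = 0" by (simp add: LIMSEQ_const_iff)
  thus ?thesis by (simp add: D_def)
qed

definition Mc :: "complex \<Rightarrow> complex \<Rightarrow> complex \<Rightarrow> nat \<Rightarrow> nat \<Rightarrow> complex" where
  "Mc a k q n j = (qpoch (k/a) q (n-j) * qpoch k q (n+j)) / (qpoch q q (n-j) * qpoch (a*q) q (n+j))"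

lemma link0: "bcoef a k q z n * Mc a k q n 0 = Fgen a k q z 0 (P0 q) n"
  unfolding bcoef_def Mc_def Fgen_def P0_def by (simp add: divide_inverse mult_ac)

lemma linkj:
  assumes j: "j \<ge> 1" and A1: "qpoch (q*a) q j \<noteq> 0" and A2: "qpoch (q*a/z) q j \<noteq> 0"
  shows "bcoef a k q z (m+j) * Mc a k q (m+j) j = acoef a k q z j * Fgen a k q z j (qpoch (q^j) q) m"
proof -
  have e1: "qpoch z q (m+j) = qpoch z q j * qpoch (z*q^j) q m" using qpoch_add[of z q j m] by (simp add: add.commute)
  have e2: "qpoch q q (m+j-1) = qpoch q q (j-1) * qpoch (q^j) q m"
  proof -
    have "m + j - 1 = (j-1) + m" using j by simp
    moreover have "q * q^(j-1) = q^j" using j by (simp add: power_eq_if)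
    ultimately show ?thesis using qpoch_add[of q q "j-1" m] by simp
  qed
  have e3: "(q*a/z)^(m+j) = (q*a/z)^j * (q*a/z)^m" by (simp add: power_add mult.commute)
  have e4: "m + j - j = m" "m + j + j = m + 2*j" "j + m = m + j" by simp_all
  define X where "X = qpoch (q*a) q j * qpoch (q*a/z) q j"
  have X: "X \<noteq> 0" using A1 A2 by (simp add: X_def)
  have "acoef a k q z j * Fgen a k q z j (qpoch (q^j) q) m = (bcoef a k q z (m+j) * Mc a k q (m+j) j) * (X * inverse X)"
    unfolding bcoef_def Mc_def acoef_def Fgen_def e1 e2 e3 e4 X_def by (simp add: divide_inverse mult_ac)
  thus ?thesis using X by simp
qed

lemma swap_tri:
  fixes g :: "nat \<Rightarrow> nat \<Rightarrow> complex"
  shows "(\<Sum>n<N. \<Sum>i\<le>n. g n i) = (\<Sum>i<N. \<Sum>m<N-i. g (m+i) i)"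
proof (induction N)
  case 0 show ?case by simp
next
  case (Suc N)
  have "(\<Sum>i<Suc N. \<Sum>m<Suc N - i. g (m+i) i) = (\<Sum>i<N. \<Sum>m<Suc N - i. g (m+i) i) + g N N"
    by simp
  also have "(\<Sum>i<N. \<Sum>m<Suc N - i. g (m+i) i) = (\<Sum>i<N. (\<Sum>m<N - i. g (m+i) i) + g N i)"
  proof (rule sum.cong[OF refl])
    fix i assume "i \<in> {..<N}"
    hence "Suc N - i = Suc (N - i)" "N - i + i = N" by auto
    thus "(\<Sum>m<Suc N - i. g (m+i) i) = (\<Sum>m<N - i. g (m+i) i) + g N i" by simp
  qed
  also have "\<dots> = (\<Sum>i<N. \<Sum>m<N - i. g (m+i) i) + (\<Sum>i<N. g N i)" by (simp add: sum.distrib)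
  finally show ?case using Suc by (simp add: lessThan_Suc_atMost[symmetric])
qed

lemma conv0:
  fixes d :: "nat \<Rightarrow> real"
  assumes d: "summable (\<lambda>i. norm (d i))" and r: "0 \<le> r" "r < 1"
  shows "(\<lambda>N. \<Sum>i<N. norm (d i) * r^(N-i)) \<longlonglongrightarrow> 0"
proof -
  have g: "summable (\<lambda>k. norm (r^k))" using r by (simp add: summable_geometric)
  have nd: "summable (\<lambda>k. norm (norm (d k)))" using d by simp
  have "(\<lambda>k. \<Sum>i\<le>k. norm (d i) * r^(k-i)) sums ((\<Sum>k. norm (d k)) * (\<Sum>k. r^k))"
    using Cauchy_product_sums[OF nd g] by simp
  hence "(\<lambda>k. \<Sum>i\<le>k. norm (d i) * r^(k-i)) \<longlonglongrightarrow> 0"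
    using summable_LIMSEQ_zero sums_summable by blast
  hence "(\<lambda>k. r * (\<Sum>i\<le>k. norm (d i) * r^(k-i))) \<longlonglongrightarrow> r * 0" by (intro tendsto_intros)
  moreover have "r * (\<Sum>i\<le>k. norm (d i) * r^(k-i)) = (\<Sum>i<Suc k. norm (d i) * r^(Suc k - i))" for k
    by (simp add: sum_distrib_left lessThan_Suc_atMost Suc_diff_le mult_ac)
  ultimately have "(\<lambda>k. \<Sum>i<Suc k. norm (d i) * r^(Suc k - i)) \<longlonglongrightarrow> 0" by simp
  thus ?thesis by (rule LIMSEQ_imp_Suc)
qed

lemma bcoef_factored: "bcoef a k q z n = (1 - k*q^(2*n)) * inverse (1-k) * qpoch z q n * qpoch q q (n-1)
   * inverse (qpoch (q*k) q n) * inverse (qpoch (q*k/z) q n) * (q*a/z)^n"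
  unfolding bcoef_def by (simp add: divide_inverse mult_ac)

lemma Mc_factored: "Mc a k q n j = qpoch (k/a) q (n-j) * qpoch k q (n+j) * inverse (qpoch q q (n-j)) * inverse (qpoch (a*q) q (n+j))"
  unfolding Mc_def by (simp add: divide_inverse mult_ac)

context bnds begin

lemma bcoef_bnd: "norm (bcoef a k q z n) \<le> (1+Kb) * (1/\<delta>) * E * exp (1/(1 - norm q)) * (1/\<delta>) * (1/\<delta>) * norm (q*a/z)^n"
  unfolding bcoef_factored
proof (intro nm)
  show "norm (1 - k*q^(2*n)) \<le> 1 + Kb"
  proof -
    have "norm (1 - k*q^(2*n)) \<le> 1 + norm k * norm (q^(2*n))"
      using norm_triangle_ineq4[of 1 "k*q^(2*n)"] by (simp add: norm_mult)
    also have "\<dots> \<le> 1 + Kb * 1" using Kb(1) nq Kb0 by (intro add_left_mono mult_mono) auto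
    finally show ?thesis by simp
  qed
  show "norm (qpoch q q (n-1)) \<le> exp (1/(1 - norm q))" by (rule qpoch_upper[OF q]) (use q in simp)
qed (use low dpos in \<open>auto intro!: ninv qp simp: Kb norm_power\<close>)

lemma Mc_bnd: "norm (Mc a k q n j) \<le> E * E * (1/\<delta>) * (1/\<delta>)"
  unfolding Mc_factored by (intro nm) (use low dpos in \<open>auto intro!: ninv qp simp: Kb\<close>)

end

lemma ND_coef_bounds:
  assumes nd: "ND a k q z"
  obtains Cb B where "\<And>n. norm (bcoef a k q z n) \<le> Cb * norm (q*a/z)^n" "\<And>n j. norm (Mc a k q n j) \<le> B" "0 \<le> B"
    "(\<forall>n. qpoch z q n \<noteq> 0) \<Longrightarrow> \<exists>c>0. \<forall>j. c * norm (q*a/z)^j \<le> norm (acoef a k q z j)"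
proof -
  note f = ND_facts[OF nd]
  obtain Kb \<delta> where b: "bnds a k q z Kb \<delta>" using ND_bnds[OF nd] by blast
  interpret bnds a k q z Kb \<delta> by (rule b)
  have Epos: "E > 0" unfolding E_def by simp
  have c4: "\<exists>c>0. \<forall>j. c * norm (q*a/z)^j \<le> norm (acoef a k q z j)" if zn: "\<forall>n. qpoch z q n \<noteq> 0"
  proof -
    obtain dz where dz: "dz > 0" "\<And>n. dz \<le> norm (qpoch z q n)" using qpoch_lower[OF q] zn by blast
    define c where "c = dz * \<delta> / (E * E)"
    have "c * norm (q*a/z)^j \<le> norm (acoef a k q z j)" for j
    proof -
      have num: "dz * \<delta> \<le> norm (qpoch z q j) * norm (qpoch q q (j-1))"
        using dz dpos low(3)[of "j-1"] by (intro mult_mono) auto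
      have den: "norm (qpoch (q*a) q j) * norm (qpoch (q*a/z) q j) \<le> E * E"
        using Kb qp Epos by (intro mult_mono) auto
      have dpos': "0 < norm (qpoch (q*a) q j) * norm (qpoch (q*a/z) q j)" using f(9) f(10) by simp
      have "dz * \<delta> / (E * E) \<le> norm (qpoch z q j) * norm (qpoch q q (j-1)) / (norm (qpoch (q*a) q j) * norm (qpoch (q*a/z) q j))"
        using num den dpos' dz dpos Epos by (intro frac_le) auto
      hence "dz * \<delta> / (E * E) * norm (q*a/z)^j \<le> norm (qpoch z q j) * norm (qpoch q q (j-1)) / (norm (qpoch (q*a) q j) * norm (qpoch (q*a/z) q j)) * norm (q*a/z)^j"
        by (rule mult_right_mono) simp
      also have "\<dots> = norm (acoef a k q z j)" unfolding acoef_def by (simp add: norm_mult norm_divide norm_power)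
      finally show ?thesis unfolding c_def .
    qed
    moreover have "c > 0" unfolding c_def using dz dpos Epos by simp
    ultimately show ?thesis by blast
  qed
  show ?thesis
  proof (rule that)
    show "norm (bcoef a k q z n) \<le> ((1+Kb) * (1/\<delta>) * E * exp (1/(1 - norm q)) * (1/\<delta>) * (1/\<delta>)) * norm (q*a/z)^n" for n
      using bcoef_bnd[of n] by simp
    show "norm (Mc a k q n j) \<le> E * E * (1/\<delta>) * (1/\<delta>)" for n j by (rule Mc_bnd)
    show "0 \<le> E * E * (1/\<delta>) * (1/\<delta>)" using Epos dpos by simp
  qed (rule c4)
qed

lemma per_pair:
  assumes nd: "ND a k q z" and wp: "WP_Bailey_pair \<alpha> \<beta> a k q"
    and S1: "summable (\<lambda>n. norm (bcoef a k q z (Suc n) * \<beta> (Suc n)))"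
    and S2: "summable (\<lambda>n. norm (acoef a k q z (Suc n) * \<alpha> (Suc n)))"
  shows "(\<Sum>n. bcoef a k q z (Suc n) * \<beta> (Suc n)) = TT a k q z + (\<Sum>n. acoef a k q z (Suc n) * \<alpha> (Suc n))"
proof -
  note f = ND_facts[OF nd]
  define b where "b n = bcoef a k q z n" for n
  define A where "A j = acoef a k q z j" for j
  define c where "c n j = b n * Mc a k q n j" for n j
  have a0: "\<alpha> 0 = 1" using wp by (simp add: WP_Bailey_pair_def)
  have bdef: "\<beta> n = (\<Sum>j=0..n. Mc a k q n j * \<alpha> j)" if "n > 0" for n
    using wp that unfolding WP_Bailey_pair_def Mc_def by auto
  have hb: "b (Suc n) * \<beta> (Suc n) = c (Suc n) 0 + (\<Sum>i\<le>n. c (Suc n) (Suc i) * \<alpha> (Suc i))" for n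
  proof -
    have "\<beta> (Suc n) = Mc a k q (Suc n) 0 * \<alpha> 0 + (\<Sum>i=0..n. Mc a k q (Suc n) (Suc i) * \<alpha> (Suc i))"
      using bdef[of "Suc n"] sum.atLeast0_atMost_Suc_shift[of "\<lambda>j. Mc a k q (Suc n) j * \<alpha> j" n]
      by (simp add: comp_def del: sum.atLeast0_atMost_Suc)
    thus ?thesis by (simp add: a0 c_def sum_distrib_left atLeast0AtMost distrib_left mult_ac)
  qed
  have T0: "(\<lambda>n. c (Suc n) 0) sums TT a k q z"
  proof -
    have "summable (\<lambda>m. Fgen a k q z 0 (P0 q) (m+1))"
      by (rule ND_Fgen_summable(1)[where Pb="exp (1/(1 - norm q))", OF nd])
         (use f(2) in \<open>auto simp: P0_def intro: qpoch_upper\<close>)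
    thus ?thesis unfolding TT_def c_def b_def link0 by (simp add: summable_sums)
  qed
  have Tj: "(\<lambda>m. c (m + Suc i) (Suc i)) sums A (Suc i)" for i
  proof -
    have "(\<lambda>m. A (Suc i) * Fgen a k q z (Suc i) (qpoch (q^Suc i) q) m) sums (A (Suc i) * 1)"
      by (rule sums_mult[OF sumF1[OF nd]])
    moreover have "c (m + Suc i) (Suc i) = A (Suc i) * Fgen a k q z (Suc i) (qpoch (q^Suc i) q) m" for m
      unfolding c_def b_def A_def by (rule linkj) (use f(9) f(10) in auto)
    ultimately show ?thesis by simp
  qed
  define R where "R i N = (\<Sum>m. c (m + Suc N) (Suc i))" for i N
  have split: "(\<Sum>m<N-i. c (m + Suc i) (Suc i)) = A (Suc i) - R i N" if "i < N" for i N
  proof -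
    have s: "summable (\<lambda>m. c (m + Suc i) (Suc i))" using Tj[of i] by (rule sums_summable)
    have "A (Suc i) = (\<Sum>m. c (m + (N-i) + Suc i) (Suc i)) + (\<Sum>m<N-i. c (m + Suc i) (Suc i))"
      using suminf_split_initial_segment[OF s, of "N-i"] Tj[of i] by (simp add: sums_iff add.assoc)
    moreover have "m + (N-i) + Suc i = m + Suc N" for m using that by simp
    ultimately show ?thesis unfolding R_def by simp
  qed
  define E where "E N = (\<Sum>i<N. \<alpha> (Suc i) * R i N)" for N
  have PS: "(\<Sum>n<N. b (Suc n) * \<beta> (Suc n)) = (\<Sum>n<N. c (Suc n) 0) + (\<Sum>i<N. A (Suc i) * \<alpha> (Suc i)) - E N" for N
  proof -
    have "(\<Sum>n<N. b (Suc n) * \<beta> (Suc n)) = (\<Sum>n<N. c (Suc n) 0) + (\<Sum>n<N. \<Sum>i\<le>n. c (Suc n) (Suc i) * \<alpha> (Suc i))"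
      by (simp add: hb sum.distrib)
    also have "(\<Sum>n<N. \<Sum>i\<le>n. c (Suc n) (Suc i) * \<alpha> (Suc i)) = (\<Sum>i<N. \<Sum>m<N-i. c (Suc (m+i)) (Suc i) * \<alpha> (Suc i))"
      by (rule swap_tri)
    also have "\<dots> = (\<Sum>i<N. (A (Suc i) - R i N) * \<alpha> (Suc i))"
    proof (rule sum.cong[OF refl])
      fix i assume "i \<in> {..<N}"
      hence "(\<Sum>m<N-i. c (m + Suc i) (Suc i)) = A (Suc i) - R i N" by (intro split) auto
      thus "(\<Sum>m<N-i. c (Suc (m+i)) (Suc i) * \<alpha> (Suc i)) = (A (Suc i) - R i N) * \<alpha> (Suc i)"
        by (simp add: sum_distrib_right[symmetric])
    qed
    also have "\<dots> = (\<Sum>i<N. A (Suc i) * \<alpha> (Suc i)) - E N"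
      unfolding E_def by (simp add: algebra_simps sum_subtractf)
    finally show ?thesis by simp
  qed
  have E0: "E \<longlonglongrightarrow> 0"
  proof -
    obtain Cb B where Cb: "\<And>n. norm (bcoef a k q z n) \<le> Cb * norm (q*a/z)^n"
      and B: "\<And>n j. norm (Mc a k q n j) \<le> B" "0 \<le> B"
      and cA: "(\<forall>n. qpoch z q n \<noteq> 0) \<Longrightarrow> \<exists>c>0. \<forall>j. c * norm (q*a/z)^j \<le> norm (acoef a k q z j)"
      using ND_coef_bounds[OF nd] by metis
    define r where "r = norm (q*a/z)"
    have r: "0 < r" "r < 1" using f(1) f(3) f(4) f(16) by (auto simp: r_def)
    have cn: "norm (c n j) \<le> (Cb * B) * r^n" for n j
    proof -
      have "norm (c n j) = norm (b n) * norm (Mc a k q n j)" by (simp add: c_def norm_mult)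
      also have "\<dots> \<le> (Cb * r^n) * B"
      proof (rule mult_mono)
        show "norm (b n) \<le> Cb * r^n" using Cb[of n] by (simp add: b_def r_def)
        thus "0 \<le> Cb * r^n" using norm_ge_zero[of "b n"] by linarith
      qed (use B in auto)
      finally show ?thesis by (simp add: mult_ac)
    qed
    have Rb: "norm (R i N) \<le> Cb * B * r^(Suc N) / (1 - r)" for i N
    proof -
      have g: "summable (\<lambda>m. (Cb * B * r^(Suc N)) * r^m)" using r by (intro summable_mult summable_geometric) auto
      have "norm (R i N) \<le> (\<Sum>m. (Cb * B * r^(Suc N)) * r^m)" unfolding R_def
      proof (rule norm_suminf_le[OF _ g])
        fix m show "norm (c (m + Suc N) (Suc i)) \<le> Cb * B * r ^ Suc N * r ^ m"
          using cn[of "m + Suc N" "Suc i"] by (simp add: power_add mult_ac)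
      qed
      also have "\<dots> = Cb * B * r^(Suc N) / (1 - r)" using r by (simp add: suminf_mult suminf_geometric)
      finally show ?thesis .
    qed
    show ?thesis
    proof (cases "\<forall>n. qpoch z q n \<noteq> 0")
      case True
      then obtain cc where cc: "cc > 0" "\<And>j. cc * r^j \<le> norm (A j)" using cA unfolding A_def r_def by blast
      define K where "K = Cb * B / ((1 - r) * cc)"
      have Ei: "norm (\<alpha> (Suc i) * R i N) \<le> K * (norm (A (Suc i) * \<alpha> (Suc i)) * r^(N-i))" if "i < N" for i N
      proof -
        have pr: "r^(Suc N) = r^(Suc i) * r^(N-i)" using that by (simp flip: power_add)
        have rp: "r^(Suc i) > 0" using r by simp
        have al: "norm (\<alpha> (Suc i)) \<le> norm (A (Suc i) * \<alpha> (Suc i)) / (cc * r^(Suc i))"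
        proof -
          have "cc * r^(Suc i) * norm (\<alpha> (Suc i)) \<le> norm (A (Suc i)) * norm (\<alpha> (Suc i))"
            using cc(2)[of "Suc i"] by (intro mult_right_mono) auto
          thus ?thesis using cc rp by (simp add: field_simps norm_mult)
        qed
        have "norm (\<alpha> (Suc i) * R i N) = norm (\<alpha> (Suc i)) * norm (R i N)" by (simp add: norm_mult)
        also have "\<dots> \<le> (norm (A (Suc i) * \<alpha> (Suc i)) / (cc * r^(Suc i))) * (Cb * B * r^(Suc N) / (1 - r))"
          using al Rb[of i N] cc(1) rp by (intro mult_mono) auto
        also have "\<dots> = K * (norm (A (Suc i) * \<alpha> (Suc i)) * r^(N-i))"
          unfolding pr K_def using cc rp r by (simp add: field_simps)
        finally show ?thesis .
      qed
      have EN: "norm (E N) \<le> K * (\<Sum>i<N. norm (A (Suc i) * \<alpha> (Suc i)) * r^(N-i))" for N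
      proof -
        have "norm (E N) \<le> (\<Sum>i<N. norm (\<alpha> (Suc i) * R i N))" unfolding E_def by (rule norm_sum)
        also have "\<dots> \<le> (\<Sum>i<N. K * (norm (A (Suc i) * \<alpha> (Suc i)) * r^(N-i)))"
          by (rule sum_mono) (use Ei in auto)
        finally show ?thesis by (simp add: sum_distrib_left)
      qed
      have S2': "summable (\<lambda>i. norm (norm (A (Suc i) * \<alpha> (Suc i))))" using S2 by (simp add: A_def)
      have "(\<lambda>N. K * (\<Sum>i<N. norm (norm (A (Suc i) * \<alpha> (Suc i))) * r^(N-i))) \<longlonglongrightarrow> K * 0"
        by (intro tendsto_intros conv0[OF S2']) (use r in auto)
      hence G: "(\<lambda>N. K * (\<Sum>i<N. norm (A (Suc i) * \<alpha> (Suc i)) * r^(N-i))) \<longlonglongrightarrow> 0" by simp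
      show ?thesis
        by (rule Lim_null_comparison[OF _ G]) (use EN in auto)
    next
      case False
      then obtain M0 where M0: "qpoch z q M0 = 0" by blast
      have bz: "b n = 0" if "n \<ge> M0" for n
      proof -
        have "qpoch z q n = qpoch z q M0 * qpoch (z*q^M0) q (n - M0)"
          using qpoch_add[of z q M0 "n - M0"] that by simp
        thus ?thesis using M0 by (simp add: b_def bcoef_def)
      qed
      have "E N = 0" if "N \<ge> M0" for N
      proof -
        have "R i N = 0" for i unfolding R_def c_def using bz that by simp
        thus ?thesis by (simp add: E_def)
      qed
      hence "eventually (\<lambda>N. E N = 0) sequentially" by (auto simp: eventually_sequentially)
      thus ?thesis by (rule tendsto_eventually)
    qed
  qed
  have L1: "(\<lambda>N. \<Sum>n<N. b (Suc n) * \<beta> (Suc n)) \<longlonglongrightarrow> (\<Sum>n. b (Suc n) * \<beta> (Suc n))"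
    using summable_norm_cancel[OF S1] unfolding b_def by (simp add: summable_LIMSEQ)
  have L2: "(\<lambda>N. \<Sum>n<N. b (Suc n) * \<beta> (Suc n)) \<longlonglongrightarrow> TT a k q z + (\<Sum>n. A (Suc n) * \<alpha> (Suc n)) - 0"
    unfolding PS
  proof (intro tendsto_intros E0)
    show "(\<lambda>N. \<Sum>n<N. c (Suc n) 0) \<longlonglongrightarrow> TT a k q z" using T0 by (simp add: sums_def)
    show "(\<lambda>N. \<Sum>i<N. A (Suc i) * \<alpha> (Suc i)) \<longlonglongrightarrow> (\<Sum>n. A (Suc n) * \<alpha> (Suc n))"
      using summable_norm_cancel[OF S2] unfolding A_def by (simp add: summable_LIMSEQ)
  qed
  show ?thesis using LIMSEQ_unique[OF L1 L2] unfolding b_def A_def by simp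
qed

lemma bcoef_q0: "bcoef a k 0 z (Suc n) = 0" by (simp add: bcoef_def)
lemma acoef_q0: "acoef a k 0 z (Suc n) = 0" by (simp add: acoef_def)

lemma ND_intro:
  assumes "q \<noteq> 0" "norm q < 1" "a \<noteq> 0" "z \<noteq> 0" "k \<noteq> 1" "norm (q*a) < norm z"
    "\<And>n. n \<ge> 1 \<Longrightarrow> qpoch (q*k) q n \<noteq> 0 \<and> qpoch (q*k/z) q n \<noteq> 0 \<and> qpoch (q*a) q n \<noteq> 0 \<and> qpoch (q*a/z) q n \<noteq> 0"
  shows "ND a k q z"
proof -
  have "\<forall>n. qpoch (q*k) q n \<noteq> 0 \<and> qpoch (q*k/z) q n \<noteq> 0 \<and> qpoch (q*a) q n \<noteq> 0 \<and> qpoch (q*a/z) q n \<noteq> 0"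
  proof
    fix n show "qpoch (q*k) q n \<noteq> 0 \<and> qpoch (q*k/z) q n \<noteq> 0 \<and> qpoch (q*a) q n \<noteq> 0 \<and> qpoch (q*a/z) q n \<noteq> 0"
      using assms(7)[of n] by (cases n) auto
  qed
  thus ?thesis unfolding ND_def using assms(1-6) by blast
qed

theorem theorem1p2:
  fixes \<alpha> \<beta> :: "complex \<Rightarrow> complex \<Rightarrow> complex \<Rightarrow> nat \<Rightarrow> complex"
    and a k q z :: complex
  assumes hq: "norm q < 1"
    and hz: "norm (q * a) < norm z"
    and wp1: "WP_Bailey_pair (\<alpha> a k q) (\<beta> a k q) a k q"
    and wp2: "WP_Bailey_pair (\<alpha> (-a) (-k) q) (\<beta> (-a) (-k) q) (-a) (-k) q"
    and wp3: "WP_Bailey_pair (\<alpha> (a^2) (k^2) (q^2)) (\<beta> (a^2) (k^2) (q^2)) (a^2) (k^2) (q^2)"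
    and nz_z: "z \<noteq> 0" and nz_a: "a \<noteq> 0"
    and nz_k: "1 - k \<noteq> 0" "1 + k \<noteq> 0" "1 - k^2 \<noteq> 0"
    and nz_den: "\<And>n. n \<ge> 1 \<Longrightarrow>
        qpoch (q*k) q n \<noteq> 0 \<and> qpoch (q*k/z) q n \<noteq> 0 \<and>
        qpoch (-q*k) q n \<noteq> 0 \<and> qpoch (-q*k/z) q n \<noteq> 0 \<and>
        qpoch (q^2*k^2) (q^2) n \<noteq> 0 \<and> qpoch (q^2*k^2/z^2) (q^2) n \<noteq> 0 \<and>
        qpoch (q*a) q n \<noteq> 0 \<and> qpoch (q*a/z) q n \<noteq> 0 \<and>
        qpoch (-q*a) q n \<noteq> 0 \<and> qpoch (-q*a/z) q n \<noteq> 0 \<and>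
        qpoch (q^2*a^2) (q^2) n \<noteq> 0 \<and> qpoch (q^2*a^2/z^2) (q^2) n \<noteq> 0"
    and abs1: "summable (\<lambda>n. norm (bcoef a k q z (Suc n) * \<beta> a k q (Suc n)))"
    and abs2: "summable (\<lambda>n. norm (bcoef (-a) (-k) q z (Suc n) * \<beta> (-a) (-k) q (Suc n)))"
    and abs3: "summable (\<lambda>n. norm (bcoef (a^2) (k^2) (q^2) (z^2) (Suc n) * \<beta> (a^2) (k^2) (q^2) (Suc n)))"
    and abs4: "summable (\<lambda>n. norm (acoef a k q z (Suc n) * \<alpha> a k q (Suc n)))"
    and abs5: "summable (\<lambda>n. norm (acoef (-a) (-k) q z (Suc n) * \<alpha> (-a) (-k) q (Suc n)))"
    and abs6: "summable (\<lambda>n. norm (acoef (a^2) (k^2) (q^2) (z^2) (Suc n) * \<alpha> (a^2) (k^2) (q^2) (Suc n)))"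
  shows "(\<Sum>n. bcoef a k q z (Suc n) * \<beta> a k q (Suc n))
       + (\<Sum>n. bcoef (-a) (-k) q z (Suc n) * \<beta> (-a) (-k) q (Suc n))
       - 2 * (\<Sum>n. bcoef (a^2) (k^2) (q^2) (z^2) (Suc n) * \<beta> (a^2) (k^2) (q^2) (Suc n))
     = (\<Sum>n. acoef a k q z (Suc n) * \<alpha> a k q (Suc n))
       + (\<Sum>n. acoef (-a) (-k) q z (Suc n) * \<alpha> (-a) (-k) q (Suc n))
       - 2 * (\<Sum>n. acoef (a^2) (k^2) (q^2) (z^2) (Suc n) * \<alpha> (a^2) (k^2) (q^2) (Suc n))"
proof (cases "q = 0")
  case True
  have z: "(0::complex)^2 = 0" by simp
  show ?thesis unfolding True z by (simp only: bcoef_q0 acoef_q0 mult_zero_left suminf_zero) 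
next
  case q0: False
  have nd1: "ND a k q z"
  proof (rule ND_intro)
    fix n :: nat assume "n \<ge> 1" thus "qpoch (q*k) q n \<noteq> 0 \<and> qpoch (q*k/z) q n \<noteq> 0 \<and> qpoch (q*a) q n \<noteq> 0 \<and> qpoch (q*a/z) q n \<noteq> 0"
      using nz_den by blast
  qed (use q0 hq nz_a nz_z nz_k hz in auto)
  have n2: "qpoch (q*(-k)) q n \<noteq> 0 \<and> qpoch (q*(-k)/z) q n \<noteq> 0 \<and> qpoch (q*(-a)) q n \<noteq> 0 \<and> qpoch (q*(-a)/z) q n \<noteq> 0"
    if n: "n \<ge> 1" for n
  proof -
    have e: "q*(-k) = -q*k" "q*(-k)/z = -q*k/z" "q*(-a) = -q*a" "q*(-a)/z = -q*a/z" by simp_all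
    show ?thesis unfolding e using nz_den[OF n] by blast
  qed
  have k2: "-k \<noteq> 1"
  proof
    assume "-k = 1" hence "k = -1" by (metis minus_minus)
    thus False using nz_k(2) by simp
  qed
  have nd2: "ND (-a) (-k) q z"
    by (rule ND_intro[OF q0 hq _ nz_z k2 _ n2]) (use nz_a hz in auto)
  have hz2: "norm (q^2 * a^2) < norm (z^2)"
  proof -
    have "norm (q^2*a^2) = norm (q*a)^2" by (simp add: norm_mult norm_power power_mult_distrib)
    also have "\<dots> < norm z ^ 2" using hz by (intro power_strict_mono) auto
    finally show ?thesis by (simp add: norm_power)
  qed
  have n3: "qpoch (q^2*k^2) (q^2) n \<noteq> 0 \<and> qpoch (q^2*k^2/z^2) (q^2) n \<noteq> 0 \<and> qpoch (q^2*a^2) (q^2) n \<noteq> 0 \<and> qpoch (q^2*a^2/z^2) (q^2) n \<noteq> 0"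
    if n: "n \<ge> 1" for n
    using nz_den[OF n] by blast
  have q2: "norm (q^2) < 1" using hq by (simp add: norm_power power_less_one_iff)
  have k3: "k^2 \<noteq> 1" using nz_k(3) by auto
  have q20: "q^2 \<noteq> 0" "a^2 \<noteq> 0" "z^2 \<noteq> 0" using q0 nz_a nz_z by auto
  have nd3: "ND (a^2) (k^2) (q^2) (z^2)"
    by (rule ND_intro[OF q20(1) q2 q20(2) q20(3) k3 hz2 n3])
  note p1 = per_pair[OF nd1 wp1 abs1 abs4]
  note p2 = per_pair[OF nd2 wp2 abs2 abs5]
  note p3 = per_pair[OF nd3 wp3 abs3 abs6]
  note c = TT_comb[OF nd1 nd2 nd3]
  show ?thesis unfolding p1 p2 p3 using c by (simp add: algebra_simps)
qed

end
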